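(* Let $\lambda>0$, $\ell>0$ and let $n<m$ be positive integers. Then $\mathcal{E}_\lambda[\gamma_{\rm sarc}^{\lambda,\ell,n}]<\mathcal{E}_\lambda[\gamma_{\rm sarc}^{\lambda,\ell,m}]$ and $\mathcal{E}_\lambda[\gamma_{\rm larc}^{\lambda,\ell,n}]<\mathcal{E}_\lambda[\gamma_{\rm larc}^{\lambda,\ell,m}]$ (whenever $n\ge n_{\lambda,\ell}$, so that these curves are defined), and $\mathcal{E}_\lambda[\gamma_{\rm loop}^{\lambda,\ell,n}]<\mathcal{E}_\lambda[\gamma_{\rm loop}^{\lambda,\ell,m}]$.
   Context: Elliptic functions: for $q\in[0,1)$, $x\in\mathbb{R}$, $\mathrm{F}(x,q)=\int_0^x(1-q^2\sin^2\theta)^{-1/2}\,d\theta$, $\mathrm{E}(x,q)=\int_0^x(1-q^2\sin^2\theta)^{1/2}\,d\theta$, $\mathrm{K}(q)=\mathrm{F}(\pi/2,q)$, $\mathrm{E}(q)=\mathrm{E}(\pi/2,q)$; $\mathrm{am}(\cdot,q)$ is the inverse of $x\mapsto\mathrm{F}(x,q)$, $\mathrm{cn}(x,q)=\cos\mathrm{am}(x,q)$. The function $q\mapsto2\mathrm{E}(q)-\mathrm{K}(q)$ is strictly decreasing on $[0,1)$ with unique zero $q_*\in(0,1)$. On $[1/\sqrt2,1)$ let $f(q)=(4q^4-5q^2+1)\mathrm{K}(q)+(-8q^4+8q^2-1)\mathrm{E}(q)$ and $g(q)=8(2\mathrm{E}(q)-\mathrm{K}(q))^2(2q^2-1)$.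 $f$ has a unique zero $\hat q\in[1/\sqrt2,1)$; $\hat\lambda:=g(\hat q)\approx0.70107$. $g(1/\sqrt2)=0$, $g$ strictly increasing on $[1/\sqrt2,\hat q]$, strictly decreasing on $[\hat q,q_*]$ with $g(q_* )=0$, strictly increasing on $[q_*,1)$ with $g\to\infty$ at $1$. For $c\in(0,\hat\lambda]$ let $q_1(c)\in(1/\sqrt2,\hat q]$, $q_2(c)\in[\hat q,q_* )$ solve $g(q)=c$; for $c>0$ let $q_3(c)\in(q_*,1)$ solve $g(q)=c$. $n_{\lambda,\ell}=\lceil\sqrt{\lambda\ell^2/\hat\lambda}\rceil$. $\mathcal{E}_\lambda[\gamma]=\int_\gamma k^2\,ds+\lambda L[\gamma]$ ($k$ signed curvature, $s$ arclength, $L$ length). Curves (arclength parametrized on $[0,2n\mathrm{K}(q)/\alpha]$): for $n\ge n_{\lambda,\ell}$, $\gamma_{\rm sarc}^{\lambda,\ell,n}(s)=\frac1\alpha\big(2\mathrm{E}(\mathrm{am}(\alpha s-\mathrm{K}(q),q),q)+2\mathrm{E}(q)-\alpha s,\ 2q\,\mathrm{cn}(\alpha s-\mathrm{K}(q),q)\big)$ with $q=q_1(\lambda\ell^2/n^2)$, $\alpha=\frac{2n}{\ell}(2\mathrm{E}(q)-\mathrm{K}(q))$; $\gamma_{\rm larc}^{\lambda,\ell,n}$ is the same formula with $q=q_2(\lambda\ell^2/n^2)$; for $n\ge1$, $\gamma_{\rm loop}^{\lambda,\ell,n}(s)=\frac1\alpha\big(-2\mathrm{E}(\mathrm{am}(\alpha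 s-\mathrm{K}(q),q),q)-2\mathrm{E}(q)+\alpha s,\ 2q\,\mathrm{cn}(\alpha s-\mathrm{K}(q),q)\big)$ with $q=q_3(\lambda\ell^2/n^2)$, $\alpha=\frac{2n}{\ell}(\mathrm{K}(q)-2\mathrm{E}(q))$. *)

theory Defs
  imports "HOL-Analysis.Analysis"
begin

definition oint :: "(real \<Rightarrow> real) \<Rightarrow> real \<Rightarrow> real" where
  "oint h x = (if 0 \<le> x then integral {0..x} h else - integral {x..0} h)"

definition ellF :: "real \<Rightarrow> real \<Rightarrow> real" where
  "ellF x q = oint (\<lambda>\<theta>. 1 / sqrt (1 - q\<^sup>2 * (sin \<theta>)\<^sup>2)) x"

definition ellE :: "real \<Rightarrow> real \<Rightarrow> real" where
  "ellE x q = oint (\<lambda>\<theta>. sqrt (1 - q\<^sup>2 * (sin \<theta>)\<^sup>2)) x"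

definition ellK :: "real \<Rightarrow> real" where
  "ellK q = ellF (pi / 2) q"

definition ellEc :: "real \<Rightarrow> real" where
  "ellEc q = ellE (pi / 2) q"

definition jac_am :: "real \<Rightarrow> real \<Rightarrow> real" where
  "jac_am x q = (THE y. ellF y q = x)"

definition jac_cn :: "real \<Rightarrow> real \<Rightarrow> real" where
  "jac_cn x q = cos (jac_am x q)"

definition q_star :: real where
  "q_star = (THE q. 0 < q \<and> q < 1 \<and> 2 * ellEc q - ellK q = 0)"

definition f_aux :: "real \<Rightarrow> real" where
  "f_aux q = (4*q^4 - 5*q\<^sup>2 + 1) * ellK q + (-8*q^4 + 8*q\<^sup>2 - 1) * ellEc q"

definition g_aux :: "real \<Rightarrow> real" where
  "g_aux q = 8 * (2 * ellEc q - ellK q)\<^sup>2 * (2*q\<^sup>2 - 1)"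

definition q_hat :: real where
  "q_hat = (THE q. 1 / sqrt 2 \<le> q \<and> q < 1 \<and> f_aux q = 0)"

definition lambda_hat :: real where
  "lambda_hat = g_aux q_hat"

definition q1 :: "real \<Rightarrow> real" where
  "q1 c = (THE q. 1 / sqrt 2 < q \<and> q \<le> q_hat \<and> g_aux q = c)"

definition q2 :: "real \<Rightarrow> real" where
  "q2 c = (THE q. q_hat \<le> q \<and> q < q_star \<and> g_aux q = c)"

definition q3 :: "real \<Rightarrow> real" where
  "q3 c = (THE q. q_star < q \<and> q < 1 \<and> g_aux q = c)"

definition n_min :: "real \<Rightarrow> real \<Rightarrow> int" where
  "n_min lam l = \<lceil>sqrt (lam * l\<^sup>2 / lambda_hat)\<rceil>"

definition speed :: "(real \<Rightarrow> real) \<Rightarrow> (real \<Rightarrow> real) \<Rightarrow> real \<Rightarrow> real" where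
  "speed x y t = sqrt ((deriv x t)\<^sup>2 + (deriv y t)\<^sup>2)"

definition curvature :: "(real \<Rightarrow> real) \<Rightarrow> (real \<Rightarrow> real) \<Rightarrow> real \<Rightarrow> real" where
  "curvature x y t =
     (deriv x t * deriv (deriv y) t - deriv y t * deriv (deriv x) t) / (speed x y t) ^ 3"

definition curve_length :: "(real \<Rightarrow> real) \<Rightarrow> (real \<Rightarrow> real) \<Rightarrow> real \<Rightarrow> real" where
  "curve_length x y T = integral {0..T} (speed x y)"

definition energy :: "real \<Rightarrow> (real \<Rightarrow> real) \<Rightarrow> (real \<Rightarrow> real) \<Rightarrow> real \<Rightarrow> real" where
  "energy lam x y T =
     integral {0..T} (\<lambda>t. (curvature x y t)\<^sup>2 * speed x y t) + lam * curve_length x y T"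

definition arc_x :: "real \<Rightarrow> real \<Rightarrow> real \<Rightarrow> real" where
  "arc_x q al s = (2 * ellE (jac_am (al * s - ellK q) q) q + 2 * ellEc q - al * s) / al"

definition arc_y :: "real \<Rightarrow> real \<Rightarrow> real \<Rightarrow> real" where
  "arc_y q al s = 2 * q * jac_cn (al * s - ellK q) q / al"

definition loop_x :: "real \<Rightarrow> real \<Rightarrow> real \<Rightarrow> real" where
  "loop_x q al s = (- 2 * ellE (jac_am (al * s - ellK q) q) q - 2 * ellEc q + al * s) / al"

definition arc_alpha :: "real \<Rightarrow> nat \<Rightarrow> real \<Rightarrow> real" where
  "arc_alpha l n q = 2 * real n / l * (2 * ellEc q - ellK q)"

definition loop_alpha :: "real \<Rightarrow> nat \<Rightarrow> real \<Rightarrow> real" where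
  "loop_alpha l n q = 2 * real n / l * (ellK q - 2 * ellEc q)"

definition sarc_q :: "real \<Rightarrow> real \<Rightarrow> nat \<Rightarrow> real" where
  "sarc_q lam l n = q1 (lam * l\<^sup>2 / (real n)\<^sup>2)"

definition larc_q :: "real \<Rightarrow> real \<Rightarrow> nat \<Rightarrow> real" where
  "larc_q lam l n = q2 (lam * l\<^sup>2 / (real n)\<^sup>2)"

definition loop_q :: "real \<Rightarrow> real \<Rightarrow> nat \<Rightarrow> real" where
  "loop_q lam l n = q3 (lam * l\<^sup>2 / (real n)\<^sup>2)"

definition energy_sarc :: "real \<Rightarrow> real \<Rightarrow> nat \<Rightarrow> real" where
  "energy_sarc lam l n =
    (let q = sarc_q lam l n; al = arc_alpha l n q
     in energy lam (arc_x q al) (arc_y q al) (2 * real n * ellK q / al))"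

definition energy_larc :: "real \<Rightarrow> real \<Rightarrow> nat \<Rightarrow> real" where
  "energy_larc lam l n =
    (let q = larc_q lam l n; al = arc_alpha l n q
     in energy lam (arc_x q al) (arc_y q al) (2 * real n * ellK q / al))"

definition energy_loop :: "real \<Rightarrow> real \<Rightarrow> nat \<Rightarrow> real" where
  "energy_loop lam l n =
    (let q = loop_q lam l n; al = loop_alpha l n q
     in energy lam (loop_x q al) (arc_y q al) (2 * real n * ellK q / al))"

end

theory Submission
  imports Defs "HOL-Library.Sum_of_Squares"
begin

lemma intc: fixes h :: "real \<Rightarrow> real" assumes "continuous_on UNIV h" shows "h integrable_on {a..b}"
  by (rule integrable_continuous_real[OF continuous_on_subset[OF assms subset_UNIV]])

lemma oint_diff:
  fixes h :: "real \<Rightarrow> real"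
  assumes c: "continuous_on UNIV h" and ab: "a \<le> b"
  shows "oint h b - oint h a = integral {a..b} h"
proof -
  consider "0 \<le> a" | "b \<le> 0" | "a < 0" "0 < b" using ab by linarith
  then show ?thesis
  proof cases
    case 1
    then show ?thesis using Henstock_Kurzweil_Integration.integral_combine[where a=0 and c=a and b=b and f=h] intc[OF c] ab
      unfolding oint_def by auto
  next
    case 2
    then show ?thesis using Henstock_Kurzweil_Integration.integral_combine[where a=a and c=b and b=0 and f=h] intc[OF c] ab
      unfolding oint_def by (cases "b = 0") auto
  next
    case 3
    then show ?thesis using Henstock_Kurzweil_Integration.integral_combine[where a=a and c=0 and b=b and f=h] intc[OF c] ab
      unfolding oint_def by auto
  qed
qed

lemma oint_deriv:
  fixes h :: "real \<Rightarrow> real"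
  assumes c: "continuous_on UNIV h"
  shows "(oint h has_real_derivative h x) (at x)"
proof -
  define a where "a = x - 1"
  have d1: "((\<lambda>y. integral {a..y} h) has_real_derivative h x) (at x within {a..x+1})"
    by (rule integral_has_real_derivative) (auto simp: a_def intro: continuous_on_subset[OF c])
  have "interior {a..x+1} = {a<..<x+1}" by simp
  then have "at x within {a..x+1} = at x"
    by (intro at_within_interior) (auto simp: a_def)
  with d1 have d2: "((\<lambda>y. oint h a + integral {a..y} h) has_real_derivative h x) (at x)"
    by (auto intro!: derivative_eq_intros)
  show ?thesis
  proof (rule has_field_derivative_transform_within_open[OF d2, of "{a<..}"])
    fix y assume "y \<in> {a<..}"
    then show "oint h a + integral {a..y} h = oint h y"
      using oint_diff[OF c, of a y] by auto
  qed (auto simp: a_def)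
qed

lemma oint_0[simp]: "oint h 0 = 0" by (simp add: oint_def)

definition Dl :: "real \<Rightarrow> real \<Rightarrow> real" where
  "Dl q t = sqrt (1 - q\<^sup>2 * (sin t)\<^sup>2)"

lemma rad_pos: fixes q t :: real assumes "\<bar>q\<bar> < 1" shows "1 - q\<^sup>2 * (sin t)\<^sup>2 > 0"
proof -
  have "\<bar>q\<bar>^2 < 1^2" using assms by (intro power_strict_mono) auto
  then have "q\<^sup>2 < 1" by simp
  moreover have "(sin t)\<^sup>2 \<le> 1" by (simp add: abs_square_le_1)
  ultimately have "q\<^sup>2 * (sin t)\<^sup>2 < 1"
    using mult_left_le[of "(sin t)\<^sup>2" "q\<^sup>2"] by simp
  then show ?thesis by simp
qed

lemma Dl_pos: "\<bar>q\<bar> < 1 \<Longrightarrow> Dl q t > 0"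
  using rad_pos[of q t] by (simp add: Dl_def)

lemma Dl_sq: "\<bar>q\<bar> < 1 \<Longrightarrow> (Dl q t)\<^sup>2 = 1 - q\<^sup>2 * (sin t)\<^sup>2"
  using rad_pos[of q t] by (simp add: Dl_def)

lemma Dl_le1: "Dl q t \<le> 1"
  unfolding Dl_def by (simp add: real_sqrt_le_1_iff)

lemma cont_Dl: "\<bar>q\<bar> < 1 \<Longrightarrow> continuous_on UNIV (Dl q)"
  unfolding Dl_def by (intro continuous_intros)

lemma cont_iDl: "\<bar>q\<bar> < 1 \<Longrightarrow> continuous_on UNIV (\<lambda>t. 1 / Dl q t)"
  using Dl_pos by (intro continuous_intros cont_Dl) (auto simp: less_imp_neq[symmetric])

lemma ellF_Dl: "ellF x q = oint (\<lambda>t. 1 / Dl q t) x"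
  by (simp add: ellF_def Dl_def)
lemma ellE_Dl: "ellE x q = oint (Dl q) x"
  by (simp add: ellE_def Dl_def[abs_def])

lemma ellF_deriv: "\<bar>q\<bar> < 1 \<Longrightarrow> ((\<lambda>x. ellF x q) has_real_derivative 1 / Dl q x) (at x)"
  unfolding ellF_Dl by (rule oint_deriv[OF cont_iDl])

lemma ellE_deriv: "\<bar>q\<bar> < 1 \<Longrightarrow> ((\<lambda>x. ellE x q) has_real_derivative Dl q x) (at x)"
  unfolding ellE_Dl by (rule oint_deriv[OF cont_Dl])

lemma Dl_deriv: "\<bar>q\<bar> < 1 \<Longrightarrow> (Dl q has_real_derivative (- q\<^sup>2 * sin t * cos t / Dl q t)) (at t)"
proof -
  assume q: "\<bar>q\<bar> < 1"
  have "((\<lambda>t. sqrt (1 - q\<^sup>2 * (sin t)\<^sup>2)) has_real_derivative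
      (inverse (sqrt (1 - q\<^sup>2 * (sin t)\<^sup>2)) / 2) * (- (q\<^sup>2 * (2 * sin t * cos t)))) (at t)"
    by (intro DERIV_chain2[OF DERIV_real_sqrt] rad_pos[OF q] derivative_eq_intros) auto
  then show ?thesis unfolding Dl_def by (simp add: field_simps)
qed

lemma oint_sym:
  fixes h :: "real \<Rightarrow> real"
  assumes c: "continuous_on UNIV h" and ev: "\<And>t. h (-t) = h t"
    and per: "\<And>t. h (t + pi) = h t" and sym: "\<And>t. h (pi/2 + t) = h (pi/2 - t)"
  shows "oint h (-x) = - oint h x" "oint h (x + pi) = oint h x + 2 * oint h (pi/2)"
proof -
  note d = oint_deriv[OF c]
  have "\<forall>x. ((\<lambda>x. oint h x + oint h (-x)) has_real_derivative 0) (at x)"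
  proof
    fix x
    show "((\<lambda>x. oint h x + oint h (-x)) has_real_derivative 0) (at x)"
      using DERIV_add[OF d[of x] DERIV_chain2[OF d[of "-x"] DERIV_minus[OF DERIV_ident]]] ev[of x]
      by simp
  qed
  from DERIV_isconst_all[OF this, of x 0] show "oint h (-x) = - oint h x" by simp
  have "\<forall>x. ((\<lambda>x. oint h (pi/2 + x) + oint h (pi/2 - x)) has_real_derivative 0) (at x)"
  proof
    fix x
    have a: "((\<lambda>x. pi/2 + x) has_real_derivative 1) (at x)"
      by (auto intro!: derivative_eq_intros)
    have b: "((\<lambda>x. pi/2 - x) has_real_derivative -1) (at x)"
      by (auto intro!: derivative_eq_intros)
    show "((\<lambda>x. oint h (pi/2 + x) + oint h (pi/2 - x)) has_real_derivative 0) (at x)"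
      using DERIV_add[OF DERIV_chain2[OF d a] DERIV_chain2[OF d b]] sym[of x]
      by simp
  qed
  from DERIV_isconst_all[OF this, of "pi/2" 0] have pi2: "oint h pi = 2 * oint h (pi/2)" by simp
  have "\<forall>x. ((\<lambda>x. oint h (x + pi) - oint h x) has_real_derivative 0) (at x)"
  proof
    fix x
    have a: "((\<lambda>x. x + pi) has_real_derivative 1) (at x)"
      by (auto intro!: derivative_eq_intros)
    show "((\<lambda>x. oint h (x + pi) - oint h x) has_real_derivative 0) (at x)"
      using DERIV_diff[OF DERIV_chain2[OF d a] d] per[of x]
      by simp
  qed
  from DERIV_isconst_all[OF this, of x 0] pi2 show "oint h (x + pi) = oint h x + 2 * oint h (pi/2)" by simp
qed

lemma oint_odd_mult:
  fixes h :: "real \<Rightarrow> real"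
  assumes c: "continuous_on UNIV h" and ev: "\<And>t. h (-t) = h t"
    and per: "\<And>t. h (t + pi) = h t" and sym: "\<And>t. h (pi/2 + t) = h (pi/2 - t)"
  shows "oint h (pi/2 + real j * pi) = (2 * real j + 1) * oint h (pi/2)"
proof (induction j)
  case 0 then show ?case by simp
next
  case (Suc j)
  have "pi/2 + real (Suc j) * pi = (pi/2 + real j * pi) + pi" by (simp add: algebra_simps)
  then show ?case using oint_sym(2)[OF assms, of "pi/2 + real j * pi"] Suc by (simp add: algebra_simps)
qed

lemma Dl_props:
  shows "Dl q (-t) = Dl q t" "Dl q (t + pi) = Dl q t" "Dl q (pi/2 + t) = Dl q (pi/2 - t)"
  by (simp_all add: Dl_def sin_add sin_diff)

lemma ellF_props:
  assumes q: "\<bar>q\<bar> < 1"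
  shows "ellF (-x) q = - ellF x q" "ellF (x + pi) q = ellF x q + 2 * ellK q"
    "ellF (pi/2 + real j * pi) q = (2 * real j + 1) * ellK q"
  unfolding ellF_Dl ellK_def
  by (rule oint_sym oint_odd_mult; (rule cont_iDl[OF q])?; simp add: Dl_props)+

lemma ellE_props:
  assumes q: "\<bar>q\<bar> < 1"
  shows "ellE (-x) q = - ellE x q" "ellE (x + pi) q = ellE x q + 2 * ellEc q"
    "ellE (pi/2 + real j * pi) q = (2 * real j + 1) * ellEc q"
  unfolding ellE_Dl ellEc_def
  by (rule oint_sym oint_odd_mult; (rule cont_Dl[OF q])?; simp add: Dl_props)+

lemma ellF_0[simp]: "ellF 0 q = 0" and ellE_0[simp]: "ellE 0 q = 0"
  by (simp_all add: ellF_def ellE_def)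

lemma ellF_cont: "\<bar>q\<bar> < 1 \<Longrightarrow> continuous_on UNIV (\<lambda>x. ellF x q)"
  by (metis DERIV_continuous continuous_at_imp_continuous_on ellF_deriv)

lemma ellF_strict: assumes q: "\<bar>q\<bar> < 1" and "x < y" shows "ellF x q < ellF y q"
proof (rule DERIV_pos_imp_increasing[OF assms(2)])
  fix z
  show "\<exists>y. ((\<lambda>a. ellF a q) has_real_derivative y) (at z) \<and> 0 < y"
    using ellF_deriv[OF q, of z] Dl_pos[OF q, of z] by (intro exI[of _ "1 / Dl q z"]) auto
qed

lemma ellF_ge: assumes q: "\<bar>q\<bar> < 1" and "0 \<le> x" shows "x \<le> ellF x q"
proof -
  have "(\<lambda>x. ellF x q - x) 0 \<le> (\<lambda>x. ellF x q - x) x"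
  proof (rule DERIV_nonneg_imp_nondecreasing[OF assms(2)])
    fix z
    have "1 \<le> 1 / Dl q z" using Dl_pos[OF q, of z] Dl_le1[of q z] by simp
    then show "\<exists>y. ((\<lambda>x. ellF x q - x) has_real_derivative y) (at z) \<and> 0 \<le> y"
      by (intro exI[of _ "1 / Dl q z - 1"] conjI DERIV_diff ellF_deriv[OF q] DERIV_ident) auto
  qed
  then show ?thesis by simp
qed

lemma ellF_le: assumes q: "\<bar>q\<bar> < 1" and "x \<le> 0" shows "ellF x q \<le> x"
  using ellF_ge[OF q, of "-x"] ellF_props(1)[OF q, of x] assms(2) by simp

lemma am_ex: assumes q: "\<bar>q\<bar> < 1" shows "\<exists>!y. ellF y q = x"
proof -
  have "\<exists>y. -\<bar>x\<bar> \<le> y \<and> y \<le> \<bar>x\<bar> \<and> ellF y q = x"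
    by (rule IVT') (use ellF_ge[OF q, of "\<bar>x\<bar>"] ellF_le[OF q, of "-\<bar>x\<bar>"]
        continuous_on_subset[OF ellF_cont[OF q]] in auto)
  then obtain y where "ellF y q = x" by blast
  moreover have "\<And>z. ellF z q = x \<Longrightarrow> z = y"
    by (metis \<open>ellF y q = x\<close> ellF_strict[OF q] linorder_neqE_linordered_idom less_irrefl)
  ultimately show ?thesis by blast
qed

lemma am_F: "\<bar>q\<bar> < 1 \<Longrightarrow> ellF (jac_am x q) q = x"
  unfolding jac_am_def by (rule theI'[OF am_ex])

lemma F_am: "\<bar>q\<bar> < 1 \<Longrightarrow> jac_am (ellF y q) q = y"
  unfolding jac_am_def by (rule the1_equality[OF am_ex]) auto

lemma am_deriv: assumes q: "\<bar>q\<bar> < 1"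
  shows "((\<lambda>x. jac_am x q) has_real_derivative Dl q (jac_am x q)) (at x)"
proof -
  have cont: "isCont (\<lambda>x. jac_am x q) x"
  proof -
    have "isCont (\<lambda>x. jac_am x q) (ellF (jac_am x q) q)"
      by (rule isCont_inverse_function[where d=1]) (auto simp: F_am[OF q] intro: DERIV_isCont ellF_deriv[OF q])
    then show ?thesis by (simp add: am_F[OF q])
  qed
  have "((\<lambda>x. jac_am x q) has_real_derivative inverse (1 / Dl q (jac_am x q))) (at x)"
    by (rule DERIV_inverse_function[where a="x - 1" and b="x + 1"])
      (use ellF_deriv[OF q] Dl_pos[OF q, of "jac_am x q"] am_F[OF q] cont in auto)
  then show ?thesis by simp
qed

lemma am_cont: "\<bar>q\<bar> < 1 \<Longrightarrow> isCont (\<lambda>x. jac_am x q) x"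
  using am_deriv DERIV_isCont by blast

lemma ellK_ge: "\<bar>q\<bar> < 1 \<Longrightarrow> pi/2 \<le> ellK q"
  unfolding ellK_def by (rule ellF_ge) auto

lemma curve_energy:
  fixes q al sg lam :: real and n :: nat
  assumes q: "\<bar>q\<bar> < 1" and al: "al > 0" and sg: "sg\<^sup>2 = 1" and n: "n > 0"
  defines "X \<equiv> \<lambda>s. sg * ((2 * ellE (jac_am (al * s - ellK q) q) q + 2 * ellEc q - al * s) / al)"
    and "Y \<equiv> \<lambda>s. 2 * q * jac_cn (al * s - ellK q) q / al"
  shows "energy lam X Y (2 * real n * ellK q / al)
     = 8 * real n * al * (ellEc q - (1 - q\<^sup>2) * ellK q) + lam * (2 * real n * ellK q / al)"
proof -
  define K where "K = ellK q"
  define A where "A = (\<lambda>s. jac_am (al * s - K) q)"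
  define T where "T = 2 * real n * K / al"
  have Kpos: "K > 0" using ellK_ge[OF q] pi_gt_zero unfolding K_def by linarith
  have dA: "(A has_real_derivative al * Dl q (A s)) (at s)" for s
    unfolding A_def
    using DERIV_chain2[OF am_deriv[OF q] DERIV_diff[OF DERIV_cmult[OF DERIV_ident, of al] DERIV_const[of K]]]
    by (simp add: mult.commute[of "Dl q _" al])
  have DA2: "(Dl q (A s))\<^sup>2 = 1 - q\<^sup>2 * (sin (A s))\<^sup>2" for s by (rule Dl_sq[OF q])
  have dE: "((\<lambda>s. ellE (A s) q) has_real_derivative Dl q (A s) * (al * Dl q (A s))) (at s)" for s
    by (rule DERIV_chain2[OF ellE_deriv[OF q] dA])
  have dD: "((\<lambda>s. Dl q (A s)) has_real_derivative
      (- q\<^sup>2 * sin (A s) * cos (A s) / Dl q (A s)) * (al * Dl q (A s))) (at s)" for s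
    by (rule DERIV_chain2[OF Dl_deriv[OF q] dA])
  define X1 where "X1 = (\<lambda>s. sg * (1 - 2 * q\<^sup>2 * (sin (A s))\<^sup>2))"
  define X2 where "X2 = (\<lambda>s. - 4 * sg * q\<^sup>2 * al * sin (A s) * cos (A s) * Dl q (A s))"
  define Y1 where "Y1 = (\<lambda>s. - 2 * q * sin (A s) * Dl q (A s))"
  define Y2 where "Y2 = (\<lambda>s. - 2 * q * al * cos (A s) * (1 - 2 * q\<^sup>2 * (sin (A s))\<^sup>2))"
  have XA: "X = (\<lambda>s. sg * ((2 * ellE (A s) q + 2 * ellEc q - al * s) / al))"
    unfolding X_def A_def K_def ..
  have YA: "Y = (\<lambda>s. 2 * q * cos (A s) / al)"
    unfolding Y_def A_def K_def jac_cn_def ..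
  have dX: "(X has_real_derivative X1 s) (at s)" for s
  proof -
    have "(X has_real_derivative sg * ((2 * (Dl q (A s) * (al * Dl q (A s))) + 0 - al * 1) / al)) (at s)"
      unfolding XA
      by (intro DERIV_cmult DERIV_cdivide DERIV_diff DERIV_add DERIV_const DERIV_cmult dE DERIV_ident) 
    moreover have "sg * ((2 * (Dl q (A s) * (al * Dl q (A s))) + 0 - al * 1) / al) = X1 s"
      using al DA2[of s] unfolding X1_def by (simp add: power2_eq_square field_simps) algebra
    ultimately show ?thesis by simp
  qed
  have dY: "(Y has_real_derivative Y1 s) (at s)" for s
  proof -
    have "(Y has_real_derivative 2 * q * (- sin (A s) * (al * Dl q (A s))) / al) (at s)"
      unfolding YA
      by (intro DERIV_cdivide DERIV_cmult DERIV_chain2[OF DERIV_cos dA])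
    then show ?thesis using al unfolding Y1_def by (simp add: mult.assoc)
  qed
  have dX1: "(X1 has_real_derivative X2 s) (at s)" for s
  proof -
    have "(X1 has_real_derivative sg * (0 - 2 * q\<^sup>2 * (2 * sin (A s) * (cos (A s) * (al * Dl q (A s)))))) (at s)"
      unfolding X1_def
      using DERIV_chain2[OF DERIV_sin dA, of s] dA[of s]
      by (auto intro!: derivative_eq_intros)
    then show ?thesis unfolding X2_def by (simp add: algebra_simps)
  qed
  have dY1: "(Y1 has_real_derivative Y2 s) (at s)" for s
  proof -
    have "(Y1 has_real_derivative - 2 * q * (cos (A s) * (al * Dl q (A s)) * Dl q (A s)
        + sin (A s) * ((- q\<^sup>2 * sin (A s) * cos (A s) / Dl q (A s)) * (al * Dl q (A s))))) (at s)"
      unfolding Y1_def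
      using DERIV_mult[OF DERIV_chain2[OF DERIV_sin dA, of s] dD[of s]] dA[of s] dD[of s]
      by (auto intro!: derivative_eq_intros) (simp add: algebra_simps)
    moreover have "- 2 * q * (cos (A s) * (al * Dl q (A s)) * Dl q (A s)
        + sin (A s) * ((- q\<^sup>2 * sin (A s) * cos (A s) / Dl q (A s)) * (al * Dl q (A s)))) = Y2 s"
      using Dl_pos[OF q, of "A s"] DA2[of s] unfolding Y2_def
      by (simp add: power2_eq_square field_simps) algebra
    ultimately show ?thesis by simp
  qed
  have derX: "deriv X = X1" using dX DERIV_imp_deriv by blast
  have derY: "deriv Y = Y1" using dY DERIV_imp_deriv by blast
  have derX1: "deriv X1 = X2" using dX1 DERIV_imp_deriv by blast
  have derY1: "deriv Y1 = Y2" using dY1 DERIV_imp_deriv by blast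
  have sp: "speed X Y s = 1" for s
  proof -
    have "(X1 s)\<^sup>2 + (Y1 s)\<^sup>2 = 1"
      unfolding X1_def Y1_def
      by (simp add: power_mult_distrib DA2 power2_eq_square[of sg, symmetric] sg) (simp add: algebra_simps power2_eq_square)
    then show ?thesis unfolding speed_def derX derY by simp
  qed
  have cu: "(curvature X Y s)\<^sup>2 * speed X Y s = 4 * q\<^sup>2 * al\<^sup>2 * (cos (A s))\<^sup>2" for s
  proof -
    have "X1 s * Y2 s - Y1 s * X2 s = - 2 * sg * q * al * cos (A s)"
    proof -
      have "X1 s * Y2 s - Y1 s * X2 s = - 2 * sg * q * al * cos (A s) *
         ((1 - 2 * q\<^sup>2 * (sin (A s))\<^sup>2)\<^sup>2 + 4 * q\<^sup>2 * (sin (A s))\<^sup>2 * (Dl q (A s))\<^sup>2)"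
        unfolding X1_def Y1_def X2_def Y2_def by (simp add: algebra_simps power2_eq_square)
      also have "\<dots> = - 2 * sg * q * al * cos (A s)"
        by (simp add: DA2) (simp add: algebra_simps power2_eq_square)
      finally show ?thesis .
    qed
    then have "curvature X Y s = - 2 * sg * q * al * cos (A s)"
      unfolding curvature_def derX derY derX1 derY1 by (simp add: sp)
    then show ?thesis using sp[of s] sg by (simp add: power_mult_distrib)
  qed
  define G where "G = (\<lambda>s. 4 * al * (ellE (A s) q - (1 - q\<^sup>2) * (al * s - K)))"
  have dG: "(G has_real_derivative 4 * q\<^sup>2 * al\<^sup>2 * (cos (A s))\<^sup>2) (at s)" for s
  proof -
    have d: "(G has_real_derivative 4 * al * (Dl q (A s) * (al * Dl q (A s)) - (1 - q\<^sup>2) * (al * 1 - 0))) (at s)"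
      unfolding G_def
      by (intro DERIV_cmult DERIV_diff dE DERIV_ident DERIV_const)
    have e: "4 * al * (Dl q (A s) * (al * Dl q (A s)) - (1 - q\<^sup>2) * (al * 1 - 0)) = 4 * q\<^sup>2 * al\<^sup>2 * (cos (A s))\<^sup>2"
      using DA2[of s] sin_cos_squared_add[of "A s"] by algebra
    show ?thesis using d unfolding e .
  qed
  have T0: "0 \<le> T" unfolding T_def using Kpos al by simp
  have AT: "A T = pi/2 + real (n - 1) * pi"
  proof -
    have "al * T - K = (2 * real (n - 1) + 1) * K" unfolding T_def using al n by (simp add: of_nat_diff algebra_simps)
    also have "\<dots> = ellF (pi/2 + real (n - 1) * pi) q" using ellF_props(3)[OF q] unfolding K_def by simp
    finally show ?thesis unfolding A_def using F_am[OF q] by simp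
  qed
  have A0: "A 0 = - (pi/2)"
  proof -
    have "al * 0 - K = ellF (- (pi/2)) q" using ellF_props(1)[OF q] unfolding K_def ellK_def by simp
    then show ?thesis unfolding A_def using F_am[OF q] by simp
  qed
  have int1: "integral {0..T} (\<lambda>t. (curvature X Y t)\<^sup>2 * speed X Y t) = G T - G 0"
    unfolding cu
    by (rule integral_unique, rule fundamental_theorem_of_calculus[OF T0])
      (use dG in \<open>auto simp: has_real_derivative_iff_has_vector_derivative[symmetric] intro: has_field_derivative_at_within\<close>)
  have GT: "G T - G 0 = 8 * real n * al * (ellEc q - (1 - q\<^sup>2) * ellK q)"
  proof -
    have "ellE (A T) q = (2 * real (n - 1) + 1) * ellEc q" using AT ellE_props(3)[OF q] by simp
    moreover have "ellE (A 0) q = - ellEc q" using A0 ellE_props(1)[OF q] unfolding ellEc_def by simp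
    moreover have "al * T = 2 * real n * K" unfolding T_def using al by simp
    ultimately show ?thesis unfolding G_def K_def using n by (simp add: of_nat_diff algebra_simps) algebra
  qed
  have len: "curve_length X Y T = T"
    unfolding curve_length_def sp using T0 by simp
  have "energy lam X Y T = 8 * real n * al * (ellEc q - (1 - q\<^sup>2) * ellK q) + lam * T"
    unfolding energy_def int1 GT len ..
  then show ?thesis unfolding T_def K_def .
qed

lemma ellK_int: "ellK q = integral {0..pi/2} (\<lambda>t. 1 / Dl q t)"
  unfolding ellK_def ellF_Dl oint_def by simp
lemma ellEc_int: "ellEc q = integral {0..pi/2} (Dl q)"
  unfolding ellEc_def ellE_Dl oint_def by simp

lemma hasK: "\<bar>q\<bar> < 1 \<Longrightarrow> ((\<lambda>t. 1 / Dl q t) has_integral ellK q) {0..pi/2}"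
  unfolding ellK_int by (rule integrable_integral, rule intc, rule cont_iDl)
lemma hasE: "\<bar>q\<bar> < 1 \<Longrightarrow> (Dl q has_integral ellEc q) {0..pi/2}"
  unfolding ellEc_int by (rule integrable_integral, rule intc, rule cont_Dl)

lemma cont_Dl2: "continuous_on ({-1<..<1} \<times> S) (\<lambda>z. Dl (fst z) (snd z))"
  unfolding Dl_def by (intro continuous_intros)

lemma Dl2_pos: "z \<in> {-1<..<1} \<times> S \<Longrightarrow> Dl (fst z) (snd z) > 0"
  by (rule Dl_pos) auto

lemma Dl_qderiv:
  fixes x t :: real
  assumes x': "\<bar>x\<bar> < 1"
  shows "((\<lambda>x. Dl x t) has_real_derivative - x * (sin t)\<^sup>2 / Dl x t) (at x)"
proof -
    have "((\<lambda>x. sqrt (1 - x\<^sup>2 * (sin t)\<^sup>2)) has_real_derivative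
       (inverse (sqrt (1 - x\<^sup>2 * (sin t)\<^sup>2)) / 2 * (- (2 * x * (sin t)\<^sup>2)))) (at x)"
      by (intro DERIV_chain2[OF DERIV_real_sqrt] rad_pos[OF x'] derivative_eq_intros) auto
    moreover have "(inverse (sqrt (1 - x\<^sup>2 * (sin t)\<^sup>2)) / 2 * (- (2 * x * (sin t)\<^sup>2)))
        = - x * (sin t)\<^sup>2 / Dl x t"
      using Dl_pos[OF x', of t] unfolding Dl_def[symmetric] by (simp add: field_simps)
    ultimately show ?thesis
      unfolding Dl_def by simp
qed

lemma K_param_deriv:
  assumes q: "\<bar>q\<bar> < 1"
  shows "(ellK has_real_derivative integral {0..pi/2} (\<lambda>t. q * (sin t)\<^sup>2 / (Dl q t)^3)) (at q)"
proof -
  have "((\<lambda>x. integral (cbox 0 (pi/2)) (\<lambda>t. 1 / Dl x t)) has_field_derivative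
      integral (cbox 0 (pi/2)) (\<lambda>t. q * (sin t)\<^sup>2 / (Dl q t)^3)) (at q within {-1<..<1})"
  proof (rule leibniz_rule_field_derivative)
    fix x t :: real assume x: "x \<in> {-1<..<1}"
    then have x': "\<bar>x\<bar> < 1" by auto
    have d: "((\<lambda>x. 1 / Dl x t) has_real_derivative (0 * Dl x t - 1 * (- x * (sin t)\<^sup>2 / Dl x t)) / (Dl x t * Dl x t)) (at x)"
      by (rule DERIV_divide[OF DERIV_const Dl_qderiv[OF x']]) (use Dl_pos[OF x', of t] in simp)
    have e: "(0 * Dl x t - 1 * (- x * (sin t)\<^sup>2 / Dl x t)) / (Dl x t * Dl x t) = x * (sin t)\<^sup>2 / (Dl x t)^3"
      using Dl_pos[OF x', of t] by (simp add: field_simps power3_eq_cube)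
    show "((\<lambda>x. 1 / Dl x t) has_real_derivative x * (sin t)\<^sup>2 / (Dl x t)^3) (at x within {-1<..<1})"
      using d unfolding e by (rule has_field_derivative_at_within)
  next
    fix x :: real assume x: "x \<in> {-1<..<1}"
    show "(\<lambda>t. 1 / Dl x t) integrable_on cbox 0 (pi/2)"
      using x by (auto intro!: intc cont_iDl)
  next
    have "continuous_on ({-1<..<1} \<times> cbox 0 (pi/2)) (\<lambda>z. fst z * (sin (snd z))\<^sup>2 / (Dl (fst z) (snd z))^3)"
      using Dl2_pos by (intro continuous_intros cont_Dl2) force
    then show "continuous_on ({-1<..<1} \<times> cbox 0 (pi/2)) (\<lambda>(x, t). x * (sin t)\<^sup>2 / (Dl x t)^3)"
      by (simp add: split_beta)
  qed (use q in auto)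
  moreover have "at q within {-1<..<1} = at q" using q by (intro at_within_open) auto
  ultimately show ?thesis unfolding ellK_int[abs_def] by simp
qed

lemma E_param_deriv:
  assumes q: "\<bar>q\<bar> < 1"
  shows "(ellEc has_real_derivative integral {0..pi/2} (\<lambda>t. - q * (sin t)\<^sup>2 / Dl q t)) (at q)"
proof -
  have "((\<lambda>x. integral (cbox 0 (pi/2)) (\<lambda>t. Dl x t)) has_field_derivative
      integral (cbox 0 (pi/2)) (\<lambda>t. - q * (sin t)\<^sup>2 / Dl q t)) (at q within {-1<..<1})"
  proof (rule leibniz_rule_field_derivative)
    fix x t :: real assume x: "x \<in> {-1<..<1}"
    then have x': "\<bar>x\<bar> < 1" by auto
    show "((\<lambda>x. Dl x t) has_real_derivative - x * (sin t)\<^sup>2 / Dl x t) (at x within {-1<..<1})"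
      using Dl_qderiv[OF x'] by (simp add: has_field_derivative_at_within)
  next
    fix x :: real assume x: "x \<in> {-1<..<1}"
    show "(\<lambda>t. Dl x t) integrable_on cbox 0 (pi/2)"
      using x by (auto intro!: intc cont_Dl)
  next
    have "continuous_on ({-1<..<1} \<times> cbox 0 (pi/2)) (\<lambda>z. - fst z * (sin (snd z))\<^sup>2 / Dl (fst z) (snd z))"
      using Dl2_pos by (intro continuous_intros cont_Dl2) force
    then show "continuous_on ({-1<..<1} \<times> cbox 0 (pi/2)) (\<lambda>(x, t). - x * (sin t)\<^sup>2 / Dl x t)"
      by (simp add: split_beta)
  qed (use q in auto)
  moreover have "at q within {-1<..<1} = at q" using q by (intro at_within_open) auto
  ultimately show ?thesis unfolding ellEc_int[abs_def] by simp
qed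

lemma E_deriv:
  assumes q0: "0 < q" and q1: "q < 1"
  shows "(ellEc has_real_derivative (ellEc q - ellK q) / q) (at q)"
proof -
  have q: "\<bar>q\<bar> < 1" using q0 q1 by auto
  have "((\<lambda>t. (1/q) * (Dl q t - 1 / Dl q t)) has_integral (1/q) * (ellEc q - ellK q)) {0..pi/2}"
    by (intro has_integral_cmult_real has_integral_diff hasE hasK q)
  then have "((\<lambda>t. - q * (sin t)\<^sup>2 / Dl q t) has_integral (1/q) * (ellEc q - ellK q)) {0..pi/2}"
  proof (rule has_integral_eq[rotated])
    fix t
    have "(1/q) * (Dl q t - 1 / Dl q t) = ((Dl q t)\<^sup>2 - 1) / (q * Dl q t)"
      using Dl_pos[OF q, of t] q0 by (simp add: field_simps power2_eq_square)
    also have "\<dots> = - q * (sin t)\<^sup>2 / Dl q t"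
      using Dl_pos[OF q, of t] q0 Dl_sq[OF q, of t] by (simp add: field_simps power2_eq_square) algebra
    finally show "(1/q) * (Dl q t - 1 / Dl q t) = - q * (sin t)\<^sup>2 / Dl q t" .
  qed
  then have "integral {0..pi/2} (\<lambda>t. - q * (sin t)\<^sup>2 / Dl q t) = (1/q) * (ellEc q - ellK q)"
    by (rule integral_unique)
  then show ?thesis using E_param_deriv[OF q] by simp
qed

lemma phi_deriv:
  assumes q0: "0 < q" and q1: "q < 1"
  shows "((\<lambda>t. sin t * cos t / Dl q t) has_real_derivative
            (Dl q t - (1 - q\<^sup>2) / (Dl q t)^3) / q\<^sup>2) (at t)"
proof -
  have q: "\<bar>q\<bar> < 1" using q0 q1 by auto
  have pos: "Dl q t > 0" by (rule Dl_pos[OF q])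
  have d: "((\<lambda>t. sin t * cos t / Dl q t) has_real_derivative
     ((cos t * cos t + - sin t * sin t) * Dl q t - sin t * cos t * (- q\<^sup>2 * sin t * cos t / Dl q t)) / (Dl q t * Dl q t)) (at t)"
    by (rule DERIV_divide[OF DERIV_mult[OF DERIV_sin DERIV_cos] Dl_deriv[OF q]]) (use pos in simp)
  have e: "((cos t * cos t + - sin t * sin t) * Dl q t - sin t * cos t * (- q\<^sup>2 * sin t * cos t / Dl q t)) / (Dl q t * Dl q t)
     = (Dl q t - (1 - q\<^sup>2) / (Dl q t)^3) / q\<^sup>2"
  proof -
    have s: "(Dl q t)\<^sup>2 = 1 - q\<^sup>2 * (sin t)\<^sup>2" by (rule Dl_sq[OF q])
    have c: "(sin t)\<^sup>2 + (cos t)\<^sup>2 = 1" by simp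
    have "q\<^sup>2 * (((cos t * cos t + - sin t * sin t) * (Dl q t)\<^sup>2 + q\<^sup>2 * (sin t)\<^sup>2 * (cos t)\<^sup>2))
        = (Dl q t)^4 - (1 - q\<^sup>2)"
      using s c by algebra
    then show ?thesis using pos q0
      by (simp add: field_simps power2_eq_square power3_eq_cube)
        algebra
  qed
  show ?thesis using d unfolding e .
qed

lemma K_deriv:
  assumes q0: "0 < q" and q1: "q < 1"
  shows "(ellK has_real_derivative (ellEc q - (1 - q\<^sup>2) * ellK q) / (q * (1 - q\<^sup>2))) (at q)"
proof -
  have q: "\<bar>q\<bar> < 1" using q0 q1 by auto
  have "q * q < 1 * 1" using q0 q1 by (intro mult_strict_mono) auto
  then have k: "1 - q\<^sup>2 > 0" by (simp add: power2_eq_square)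
  define phi where "phi = (\<lambda>t. sin t * cos t / Dl q t)"
  have ph: "((\<lambda>t. (Dl q t - (1 - q\<^sup>2) / (Dl q t)^3) / q\<^sup>2) has_integral (phi (pi/2) - phi 0)) {0..pi/2}"
    unfolding phi_def
  proof (rule fundamental_theorem_of_calculus)
    fix x assume "x \<in> {0..pi/2}"
    show "((\<lambda>t. sin t * cos t / Dl q t) has_vector_derivative (Dl q x - (1 - q\<^sup>2) / (Dl q x)^3) / q\<^sup>2) (at x within {0..pi/2})"
      unfolding has_real_derivative_iff_has_vector_derivative[symmetric]
      by (rule has_field_derivative_at_within[OF phi_deriv[OF q0 q1]])
  qed simp
  have ph0: "phi (pi/2) - phi 0 = 0" unfolding phi_def by simp
  have "((\<lambda>t. (1/q) * ((1 / (1 - q\<^sup>2)) * (Dl q t - q\<^sup>2 * ((Dl q t - (1 - q\<^sup>2) / (Dl q t)^3) / q\<^sup>2)) - 1 / Dl q t))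
      has_integral (1/q) * ((1 / (1 - q\<^sup>2)) * (ellEc q - q\<^sup>2 * 0) - ellK q)) {0..pi/2}"
    by (intro has_integral_cmult_real has_integral_diff hasE hasK q ph[unfolded ph0])
  then have "((\<lambda>t. q * (sin t)\<^sup>2 / (Dl q t)^3) has_integral (1/q) * ((1 / (1 - q\<^sup>2)) * (ellEc q - q\<^sup>2 * 0) - ellK q)) {0..pi/2}"
  proof (rule has_integral_eq[rotated])
    fix t
    have pos: "Dl q t > 0" by (rule Dl_pos[OF q])
    have s: "q\<^sup>2 * (sin t)\<^sup>2 = 1 - (Dl q t)\<^sup>2" using Dl_sq[OF q, of t] by simp
    have "(1/q) * ((1 / (1 - q\<^sup>2)) * (Dl q t - q\<^sup>2 * ((Dl q t - (1 - q\<^sup>2) / (Dl q t)^3) / q\<^sup>2)) - 1 / Dl q t)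
        = (1 - (Dl q t)\<^sup>2) / (q * (Dl q t)^3)"
      using pos q0 k by (simp add: field_simps power2_eq_square power3_eq_cube)
    also have "\<dots> = q * (sin t)\<^sup>2 / (Dl q t)^3"
      unfolding s[symmetric] using q0 by (simp add: field_simps power2_eq_square)
    finally show "(1/q) * ((1 / (1 - q\<^sup>2)) * (Dl q t - q\<^sup>2 * ((Dl q t - (1 - q\<^sup>2) / (Dl q t)^3) / q\<^sup>2)) - 1 / Dl q t)
        = q * (sin t)\<^sup>2 / (Dl q t)^3" .
  qed
  then have "integral {0..pi/2} (\<lambda>t. q * (sin t)\<^sup>2 / (Dl q t)^3) = (1/q) * ((1 / (1 - q\<^sup>2)) * (ellEc q - q\<^sup>2 * 0) - ellK q)"
    by (rule integral_unique)
  also have "\<dots> = (ellEc q - (1 - q\<^sup>2) * ellK q) / (q * (1 - q\<^sup>2))"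
    using k q0 by (simp add: field_simps)
  finally have "integral {0..pi/2} (\<lambda>t. q * (sin t)\<^sup>2 / (Dl q t)^3) = (ellEc q - (1 - q\<^sup>2) * ellK q) / (q * (1 - q\<^sup>2))" .
  then show ?thesis using K_param_deriv[OF q] by simp
qed

lemma sin2_int: "((\<lambda>t. (sin t)\<^sup>2) has_integral pi/4) {0..pi/2}"
proof -
  have "((\<lambda>t. (sin t)\<^sup>2) has_integral ((\<lambda>t. t/2 - sin t * cos t / 2) (pi/2) - (\<lambda>t. t/2 - sin t * cos t / 2) 0)) {0..pi/2}"
  proof (rule fundamental_theorem_of_calculus)
    fix x :: real
    have "((\<lambda>t. t/2 - sin t * cos t / 2) has_real_derivative 1/2 - (cos x * cos x + - sin x * sin x) / 2) (at x)"
      by (intro DERIV_diff DERIV_cdivide DERIV_ident DERIV_mult[OF DERIV_sin DERIV_cos])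
    moreover have "1/2 - (cos x * cos x + - sin x * sin x) / 2 = (sin x)\<^sup>2"
      using sin_cos_squared_add[of x] by (simp add: power2_eq_square field_simps)
    ultimately show "((\<lambda>t. t/2 - sin t * cos t / 2) has_vector_derivative (sin x)\<^sup>2) (at x within {0..pi/2})"
      unfolding has_real_derivative_iff_has_vector_derivative[symmetric]
      by (simp add: has_field_derivative_at_within)
  qed simp
  then show ?thesis by simp
qed

lemma lin_int: "((\<lambda>t. a + b * (sin t)\<^sup>2) has_integral a * (pi/2) + b * (pi/4)) {0..pi/2}"
proof -
  have "((\<lambda>t. a) has_integral a * (pi/2)) {0..pi/2}"
    using has_integral_const_real[of a 0 "pi/2"] by (simp add: mult.commute)
  then show ?thesis by (intro has_integral_add has_integral_cmult_real sin2_int)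
qed

lemma Dl_lower:
  fixes q t :: real
  assumes q0: "0 < q" and q1: "q < 1"
  shows "1 - (1 - sqrt (1 - q\<^sup>2)) * (sin t)\<^sup>2 \<le> Dl q t"
proof -
  define k where "k = sqrt (1 - q\<^sup>2)"
  define x where "x = (sin t)\<^sup>2"
  have qq: "q\<^sup>2 < 1" using q0 q1 by (simp add: power2_eq_square) (metis mult_strict_mono' mult_1 q0 less_imp_le)
  have k0: "0 < k" using qq unfolding k_def by simp
  have k1: "k \<le> 1" unfolding k_def by simp
  have kk: "k\<^sup>2 = 1 - q\<^sup>2" unfolding k_def using qq by simp
  have x0: "0 \<le> x" and x1: "x \<le> 1" unfolding x_def by (simp_all add: abs_square_le_1)
  have xx: "x * x \<le> x" using x0 x1 by (simp add: mult_left_le)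
  have "(1 - (1 - k) * x)\<^sup>2 = 1 - 2 * (1 - k) * x + (1 - k)\<^sup>2 * (x * x)"
    by (simp add: power2_eq_square algebra_simps)
  also have "\<dots> \<le> 1 - 2 * (1 - k) * x + (1 - k)\<^sup>2 * x"
    using xx by (intro add_left_mono mult_left_mono) auto
  also have "\<dots> = 1 - q\<^sup>2 * x" using kk by (simp add: power2_eq_square algebra_simps) algebra
  finally show ?thesis unfolding Dl_def k_def[symmetric] x_def[symmetric] by (rule real_le_rsqrt)
qed

lemma iDl_upper:
  fixes q t :: real
  assumes q0: "0 < q" and q1: "q < 1"
  shows "1 / Dl q t \<le> 1 + (1 / sqrt (1 - q\<^sup>2) - 1) * (sin t)\<^sup>2"
proof -
  define k where "k = sqrt (1 - q\<^sup>2)"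
  define x where "x = (sin t)\<^sup>2"
  have qq: "q\<^sup>2 < 1" using q0 q1 by (simp add: power2_eq_square) (metis mult_strict_mono' mult_1 q0 less_imp_le)
  have k0: "0 < k" using qq unfolding k_def by simp
  have k1: "k < 1" using q0 qq unfolding k_def by (simp add: real_sqrt_less_iff)
  have kk: "k\<^sup>2 = 1 - q\<^sup>2" unfolding k_def using qq by simp
  have x0: "0 \<le> x" and x1: "x \<le> 1" unfolding x_def by (simp_all add: abs_square_le_1)
  have qabs: "\<bar>q\<bar> < 1" using q0 q1 by simp
  have D0: "Dl q t > 0" by (rule Dl_pos[OF qabs])
  have D2: "(Dl q t)\<^sup>2 = 1 - q\<^sup>2 * x" unfolding x_def by (rule Dl_sq[OF qabs])
  define r where "r = k + (1 - k) * x"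
  have r0: "r > 0" unfolding r_def using k0 k1 x0 by (simp add: add_pos_nonneg)
  have id: "r\<^sup>2 * (1 - (1 - k\<^sup>2) * x) - k\<^sup>2 = (1 - k)\<^sup>2 * x * (1 - x) * (k * (2 + k) + (1 - k\<^sup>2) * x)"
    unfolding r_def by (simp add: power2_eq_square algebra_simps)
  have "0 \<le> (1 - k)\<^sup>2 * x * (1 - x) * (k * (2 + k) + (1 - k\<^sup>2) * x)"
    using x0 x1 k0 k1 by (intro mult_nonneg_nonneg add_nonneg_nonneg) (auto simp: power2_eq_square mult_le_one)
  then have "k\<^sup>2 \<le> r\<^sup>2 * (Dl q t)\<^sup>2" using id D2 kk by simp
  then have "k\<^sup>2 \<le> (r * Dl q t)\<^sup>2" by (simp add: power_mult_distrib)
  then have "k \<le> r * Dl q t" using k0 r0 D0 by (simp add: power2_le_iff_abs_le abs_of_pos)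
  then have "1 / Dl q t \<le> r / k" using k0 D0 by (simp add: field_simps)
  also have "r / k = 1 + (1 / k - 1) * x" unfolding r_def using k0 by (simp add: field_simps)
  finally show ?thesis unfolding k_def x_def .
qed

lemma Dl_upper:
  fixes q t :: real
  assumes q0: "0 < q" and q1: "q < 1"
  shows "Dl q t \<le> 1 - (q\<^sup>2 / 2) * (sin t)\<^sup>2"
proof -
  have qabs: "\<bar>q\<bar> < 1" using q0 q1 by simp
  have y0: "0 \<le> q\<^sup>2 * (sin t)\<^sup>2" by simp
  have y1: "q\<^sup>2 * (sin t)\<^sup>2 < 1" using rad_pos[OF qabs, of t] by simp
  have sq: "0 \<le> (q\<^sup>2 * (sin t)\<^sup>2)\<^sup>2" by simp
  have "1 - q\<^sup>2 * (sin t)\<^sup>2 \<le> (1 - (q\<^sup>2 / 2) * (sin t)\<^sup>2)\<^sup>2"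
    using sq by (simp add: power2_eq_square algebra_simps)
  moreover have "0 \<le> 1 - (q\<^sup>2 / 2) * (sin t)\<^sup>2" using y1 y0 by simp
  ultimately show ?thesis unfolding Dl_def using real_sqrt_le_iff' rad_pos[OF qabs, of t] by simp
qed

lemma KE_bounds:
  fixes q :: real
  assumes q0: "0 < q" and q1: "q < 1"
  shows "pi/4 * (1 + sqrt (1 - q\<^sup>2)) \<le> ellEc q"
    "ellK q \<le> pi/4 * (1 + 1 / sqrt (1 - q\<^sup>2))"
    "ellEc q \<le> pi/2 - q\<^sup>2 * pi / 8"
    "pi/2 \<le> ellK q"
proof -
  have qabs: "\<bar>q\<bar> < 1" using q0 q1 by simp
  have "1 * (pi/2) + (- (1 - sqrt (1 - q\<^sup>2))) * (pi/4) \<le> ellEc q"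
  proof (rule has_integral_le[OF lin_int hasE[OF qabs]])
    fix x show "1 + (- (1 - sqrt (1 - q\<^sup>2))) * (sin x)\<^sup>2 \<le> Dl q x"
      using Dl_lower[OF q0 q1, of x] by (simp add: algebra_simps)
  qed
  then show "pi/4 * (1 + sqrt (1 - q\<^sup>2)) \<le> ellEc q" by (simp add: algebra_simps)
  have "ellK q \<le> 1 * (pi/2) + (1 / sqrt (1 - q\<^sup>2) - 1) * (pi/4)"
    by (rule has_integral_le[OF hasK[OF qabs] lin_int]) (use iDl_upper[OF q0 q1] in simp)
  then show "ellK q \<le> pi/4 * (1 + 1 / sqrt (1 - q\<^sup>2))" by (simp add: algebra_simps)
  have "ellEc q \<le> 1 * (pi/2) + (- (q\<^sup>2 / 2)) * (pi/4)"
    by (rule has_integral_le[OF hasE[OF qabs] lin_int]) (use Dl_upper[OF q0 q1] in simp)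
  then show "ellEc q \<le> pi/2 - q\<^sup>2 * pi / 8" by (simp add: algebra_simps)
  show "pi/2 \<le> ellK q" by (rule ellK_ge[OF qabs])
qed

lemma qq1: assumes "0 < (q::real)" "q < 1" shows "q\<^sup>2 < 1"
proof -
  have "q * q < 1 * 1" using assms by (intro mult_strict_mono) auto
  then show ?thesis by (simp add: power2_eq_square)
qed

lemma KE_facts:
  fixes q :: real
  assumes q0: "0 < q" and q1: "q < 1"
  shows "ellK q > 0" "ellEc q > 0" "ellEc q - (1 - q\<^sup>2) * ellK q > 0" "ellEc q < ellK q"
    "sqrt (1 - q\<^sup>2) * ellK q \<le> ellEc q"
proof -
  note b = KE_bounds[OF q0 q1]
  define k where "k = sqrt (1 - q\<^sup>2)"
  have qq: "q\<^sup>2 < 1" by (rule qq1[OF q0 q1])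
  have k0: "0 < k" using qq unfolding k_def by simp
  have k1: "k < 1" using q0 qq unfolding k_def by (simp add: real_sqrt_less_iff)
  have kk: "k\<^sup>2 = 1 - q\<^sup>2" unfolding k_def using qq by simp
  show K0: "ellK q > 0" using b(4) pi_gt_zero by linarith
  have E0': "pi/4 * (1 + k) > 0" using k0 by simp
  show E0: "ellEc q > 0" using b(1) E0' unfolding k_def by linarith
  have "k * ellK q \<le> k * (pi/4 * (1 + 1 / k))" using b(2) k0 unfolding k_def by simp
  also have "\<dots> = pi/4 * (1 + k)" using k0 by (simp add: field_simps)
  finally show kK: "sqrt (1 - q\<^sup>2) * ellK q \<le> ellEc q" using b(1) unfolding k_def by linarith
  have "(1 - q\<^sup>2) * ellK q = k * (k * ellK q)" using kk by (simp add: power2_eq_square)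
  also have "\<dots> \<le> k * ellEc q" using kK k0 unfolding k_def by simp
  also have "\<dots> < ellEc q" using k1 E0 by simp
  finally show "ellEc q - (1 - q\<^sup>2) * ellK q > 0" by simp
  have "q\<^sup>2 * pi / 8 > 0" using q0 by simp
  then show "ellEc q < ellK q" using b(3) b(4) by linarith
qed

lemma at_isqrt2:
  shows "2 * ellEc (1 / sqrt 2) - ellK (1 / sqrt 2) \<ge> pi / 4"
proof -
  define q :: real where "q = 1 / sqrt 2"
  have q0: "0 < q" and q1: "q < 1" unfolding q_def by (simp_all add: field_simps)
  have qs: "q\<^sup>2 = 1/2" unfolding q_def by (simp add: power_divide)
  have k: "sqrt (1 - q\<^sup>2) = 1 / sqrt 2" unfolding qs by (simp add: real_sqrt_divide)
  note b = KE_bounds[OF q0 q1, unfolded k]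
  have "2 * (pi/4 * (1 + 1 / sqrt 2)) - pi/4 * (1 + 1 / (1 / sqrt 2)) = pi / 4"
    by (simp add: field_simps)
  then show ?thesis using b(1) b(2) unfolding q_def[symmetric] by linarith
qed

lemma f_isqrt2: "f_aux (1 / sqrt 2) > 0"
proof -
  have qs: "(1 / sqrt 2)\<^sup>2 = (1/2::real)" by (simp add: power_divide)
  have q4: "(1 / sqrt 2)^4 = (1/4::real)"
  proof -
    have "(1 / sqrt 2)^4 = ((1 / sqrt 2)\<^sup>2)\<^sup>2" by (simp flip: power_mult)
    then show ?thesis using qs by (simp add: power2_eq_square)
  qed
  have "f_aux (1 / sqrt 2) = (2 * ellEc (1 / sqrt 2) - ellK (1 / sqrt 2)) / 2"
    unfolding f_aux_def qs q4 by (simp add: field_simps)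
  then show ?thesis using at_isqrt2 pi_gt_zero by (smt (verit) divide_pos_pos)
qed

lemma K_log:
  fixes q :: real
  assumes q0: "0 < q" and q1: "q < 1"
  shows "ln (sqrt (1 - q\<^sup>2) + pi/2) - ln (sqrt (1 - q\<^sup>2)) \<le> ellK q"
proof -
  define k where "k = sqrt (1 - q\<^sup>2)"
  have qq: "q\<^sup>2 < 1" by (rule qq1[OF q0 q1])
  have k0: "0 < k" using qq unfolding k_def by simp
  have kk: "k\<^sup>2 = 1 - q\<^sup>2" unfolding k_def using qq by simp
  have qabs: "\<bar>q\<bar> < 1" using q0 q1 by simp
  define F where "F = (\<lambda>t. - ln (k + pi/2 - t))"
  have int: "((\<lambda>t. 1 / (k + pi/2 - t)) has_integral (F (pi/2) - F 0)) {0..pi/2}"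
  proof (rule fundamental_theorem_of_calculus)
    fix x :: real assume x: "x \<in> {0..pi/2}"
    then have pos: "k + pi/2 - x > 0" using k0 by auto
    have inner: "((\<lambda>t. k + pi/2 - t) has_real_derivative -1) (at x)"
      by (auto intro!: derivative_eq_intros)
    have "(F has_real_derivative - (inverse (k + pi/2 - x) * -1)) (at x)"
      unfolding F_def by (rule DERIV_minus[OF DERIV_chain2[OF DERIV_ln[OF pos] inner]])
    then show "(F has_vector_derivative 1 / (k + pi/2 - x)) (at x within {0..pi/2})"
      unfolding has_real_derivative_iff_has_vector_derivative[symmetric]
      by (simp add: has_field_derivative_at_within inverse_eq_divide)
  qed simp
  have "F (pi/2) - F 0 \<le> ellK q"
  proof (rule has_integral_le[OF int hasK[OF qabs]])
    fix t :: real assume t: "t \<in> {0..pi/2}"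
    have c0: "0 \<le> cos t" using t by (intro cos_ge_zero) auto
    have D0: "0 < Dl q t" by (rule Dl_pos[OF qabs])
    have "(Dl q t)\<^sup>2 = k\<^sup>2 + q\<^sup>2 * (cos t)\<^sup>2"
      unfolding Dl_sq[OF qabs] kk using sin_cos_squared_add[of t] by algebra
    also have "\<dots> \<le> k\<^sup>2 + (cos t)\<^sup>2"
      using qq by (intro add_left_mono) (simp add: mult_left_le_one_le)
    also have "\<dots> \<le> (k + cos t)\<^sup>2"
      using k0 c0 by (simp add: power2_eq_square algebra_simps)
    finally have "Dl q t \<le> k + cos t"
      using D0 k0 c0 by (simp add: power2_le_iff_abs_le abs_of_pos add_pos_nonneg)
    also have "cos t \<le> pi/2 - t"
      using sin_x_le_x[of "pi/2 - t"] t by (simp add: sin_diff)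
    finally have "Dl q t \<le> k + pi/2 - t" by simp
    then show "1 / (k + pi/2 - t) \<le> 1 / Dl q t"
      using D0 by (intro divide_left_mono) auto
  qed
  then show ?thesis unfolding F_def k_def by simp
qed

lemma K_big: "\<exists>q. 0 < q \<and> q < 1 \<and> 3/4 \<le> q\<^sup>2 \<and> M \<le> ellK q"
proof -
  define k where "k = min (1/2) (pi/2 * exp (- M))"
  have k0: "0 < k" unfolding k_def by simp
  have k2: "k \<le> 1/2" unfolding k_def by simp
  have k3: "k \<le> pi/2 * exp (- M)" unfolding k_def by simp
  define q where "q = sqrt (1 - k\<^sup>2)"
  have "k\<^sup>2 \<le> (1/2)\<^sup>2" using k0 k2 by (intro power_mono) auto
  then have kk: "k\<^sup>2 \<le> 1/4" by (simp add: power2_eq_square)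
  have k20: "0 < k\<^sup>2" using k0 by simp
  have qsq: "q\<^sup>2 = 1 - k\<^sup>2" unfolding q_def using kk by simp
  have q0: "0 < q" unfolding q_def using kk by simp
  have q1: "q < 1" unfolding q_def using k20 by simp
  have kq: "sqrt (1 - q\<^sup>2) = k" unfolding qsq using k0 by simp
  have "ln (pi/2) \<le> ln (k + pi/2)" by (subst ln_le_cancel_iff) (use k0 pi_gt_zero in \<open>auto intro: add_pos_pos\<close>)
  moreover have "ln k \<le> ln (pi/2) - M"
  proof -
    have "ln k \<le> ln (pi/2 * exp (- M))" using k0 k3 by simp
    also have "\<dots> = ln (pi/2) - M" by (subst ln_mult) auto
    finally show ?thesis .
  qed
  ultimately have "M \<le> ln (k + pi/2) - ln k" by linarith
  also have "\<dots> \<le> ellK q" using K_log[OF q0 q1] unfolding kq .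
  finally show ?thesis using q0 q1 qsq kk by (intro exI[of _ q]) auto
qed

definition Dq :: "real \<Rightarrow> real" where "Dq q = 2 * ellEc q - ellK q"
definition Hq :: "real \<Rightarrow> real" where "Hq q = 1 / (2 * q\<^sup>2 - 1) + 2 * ellK q / Dq q"

lemma D_deriv:
  assumes q0: "0 < q" and q1: "q < 1"
  shows "(Dq has_real_derivative 2 * ((ellEc q - ellK q) / q) - (ellEc q - (1 - q\<^sup>2) * ellK q) / (q * (1 - q\<^sup>2))) (at q)"
  unfolding Dq_def[abs_def]
  by (intro DERIV_diff DERIV_cmult E_deriv[OF q0 q1] K_deriv[OF q0 q1])

lemma D_neg_deriv:
  assumes q0: "0 < q" and q1: "q < 1"
  shows "2 * ((ellEc q - ellK q) / q) - (ellEc q - (1 - q\<^sup>2) * ellK q) / (q * (1 - q\<^sup>2)) < 0"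
proof -
  note kf = KE_facts[OF q0 q1]
  have k: "0 < 1 - q\<^sup>2" using qq1[OF q0 q1] by simp
  have "(ellEc q - ellK q) / q < 0" using kf(4) q0 by (simp add: divide_neg_pos)
  moreover have "(ellEc q - (1 - q\<^sup>2) * ellK q) / (q * (1 - q\<^sup>2)) > 0" using kf(3) q0 k by simp
  ultimately show ?thesis by linarith
qed

lemma f_deriv:
  assumes q0: "0 < q" and q1: "q < 1"
  shows "(f_aux has_real_derivative q * ((20 * q\<^sup>2 - 13) * ellK q - 20 * (2 * q\<^sup>2 - 1) * ellEc q)) (at q)"
proof -
  have k: "1 - q\<^sup>2 \<noteq> 0" using qq1[OF q0 q1] by simp
  have dp1: "((\<lambda>q. 4*q^4 - 5*q\<^sup>2 + 1) has_real_derivative 16 * q^3 - 10 * q) (at q)"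
    by (auto intro!: derivative_eq_intros simp: power2_eq_square power3_eq_cube)
  have dp2: "((\<lambda>q. -8*q^4 + 8*q\<^sup>2 - 1) has_real_derivative - 32 * q^3 + 16 * q) (at q)"
    by (auto intro!: derivative_eq_intros simp: power2_eq_square power3_eq_cube)
  note d = DERIV_add[OF DERIV_mult[OF dp1 K_deriv[OF q0 q1]] DERIV_mult[OF dp2 E_deriv[OF q0 q1]]]
  have e: "(16 * q^3 - 10 * q) * ellK q + (ellEc q - (1 - q\<^sup>2) * ellK q) / (q * (1 - q\<^sup>2)) * (4*q^4 - 5*q\<^sup>2 + 1)
    + ((- 32 * q^3 + 16 * q) * ellEc q + (ellEc q - ellK q) / q * (-8*q^4 + 8*q\<^sup>2 - 1))
    = q * ((20 * q\<^sup>2 - 13) * ellK q - 20 * (2 * q\<^sup>2 - 1) * ellEc q)"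
    using q0 k by (simp add: field_simps) algebra
  show ?thesis using d unfolding e f_aux_def[abs_def] .
qed

lemma mul_to_div: "(X::real) * c = Y \<Longrightarrow> c \<noteq> 0 \<Longrightarrow> X = Y / c"
  by (simp add: eq_divide_eq)

lemma g_deriv:
  assumes q0: "0 < q" and q1: "q < 1"
  shows "(g_aux has_real_derivative 16 * Dq q * f_aux q / (q * (1 - q\<^sup>2))) (at q)"
proof -
  have k: "1 - q\<^sup>2 \<noteq> 0" using qq1[OF q0 q1] by simp
  have geq: "g_aux = (\<lambda>q. 8 * (Dq q * Dq q) * (2 * q * q - 1))"
    unfolding g_aux_def[abs_def] Dq_def by (simp add: power2_eq_square mult.assoc)
  have dp: "((\<lambda>q. 2 * q * q - 1) has_real_derivative 4 * q) (at q)"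
    by (auto intro!: derivative_eq_intros)
  define a where "a = (ellEc q - ellK q) / q"
  define b where "b = (ellEc q - (1 - q\<^sup>2) * ellK q) / (q * (1 - q\<^sup>2))"
  have ha: "a * q = ellEc q - ellK q" unfolding a_def using q0 by simp
  have hb: "b * (q * (1 - q\<^sup>2)) = ellEc q - (1 - q\<^sup>2) * ellK q" unfolding b_def using q0 k by simp
  note dD = D_deriv[OF q0 q1, folded a_def b_def]
  note d = DERIV_mult[OF DERIV_cmult[OF DERIV_mult[OF dD dD], of 8] dp]
  have e: "8 * ((2 * a - b) * Dq q + (2 * a - b) * Dq q) * (2 * q * q - 1) + 4 * q * (8 * (Dq q * Dq q))
     = 16 * Dq q * f_aux q / (q * (1 - q\<^sup>2))"
  proof (rule mul_to_div)
    show "(8 * ((2 * a - b) * Dq q + (2 * a - b) * Dq q) * (2 * q * q - 1) + 4 * q * (8 * (Dq q * Dq q))) * (q * (1 - q\<^sup>2))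
      = 16 * Dq q * f_aux q"
      unfolding f_aux_def Dq_def using ha hb by algebra
  qed (use q0 k in simp)
  show ?thesis using d unfolding e geq .
qed

lemma H_deriv:
  assumes q0: "0 < q" and q1: "q < 1" and D0: "Dq q \<noteq> 0" and h: "2 * q\<^sup>2 - 1 \<noteq> 0"
  shows "(Hq has_real_derivative
     - 4 * f_aux q * (ellEc q - (1 - q\<^sup>2) * ellK q) / (q * (1 - q\<^sup>2) * (Dq q)\<^sup>2 * (2 * q\<^sup>2 - 1)\<^sup>2)) (at q)"
proof -
  have k: "1 - q\<^sup>2 \<noteq> 0" using qq1[OF q0 q1] by simp
  have heq: "Hq = (\<lambda>q. 1 / (2 * q * q - 1) + 2 * ellK q / Dq q)"
    unfolding Hq_def[abs_def] by (simp add: power2_eq_square mult.assoc)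
  have h': "2 * q * q - 1 \<noteq> 0" using h by (simp add: power2_eq_square)
  have dp: "((\<lambda>q. 2 * q * q - 1) has_real_derivative 4 * q) (at q)"
    by (auto intro!: derivative_eq_intros)
  define a where "a = (ellEc q - ellK q) / q"
  define b where "b = (ellEc q - (1 - q\<^sup>2) * ellK q) / (q * (1 - q\<^sup>2))"
  have ha: "a * q = ellEc q - ellK q" unfolding a_def using q0 by simp
  have hb: "b * (q * (1 - q\<^sup>2)) = ellEc q - (1 - q\<^sup>2) * ellK q" unfolding b_def using q0 k by simp
  note dD = D_deriv[OF q0 q1, folded a_def b_def]
  note d = DERIV_add[OF DERIV_divide[OF DERIV_const[of 1] dp h'] DERIV_divide[OF DERIV_cmult[OF K_deriv[OF q0 q1, folded b_def], of 2] dD D0]]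
  have e1: "(0 * (2 * q * q - 1) - 1 * (4 * q)) / ((2 * q * q - 1) * (2 * q * q - 1)) +
    (2 * b * Dq q - 2 * ellK q * (2 * a - b)) / (Dq q * Dq q)
    = (- 4 * q * (Dq q * Dq q) + (2 * b * Dq q - 2 * ellK q * (2 * a - b)) * ((2 * q * q - 1) * (2 * q * q - 1)))
      / (((2 * q * q - 1) * (2 * q * q - 1)) * (Dq q * Dq q))"
    using D0 h' by (subst add_frac_eq) auto
  have e2: "(- 4 * q * (Dq q * Dq q) + (2 * b * Dq q - 2 * ellK q * (2 * a - b)) * ((2 * q * q - 1) * (2 * q * q - 1)))
      = - 4 * f_aux q * (ellEc q - (1 - q\<^sup>2) * ellK q) / (q * (1 - q\<^sup>2))"
  proof (rule mul_to_div)
    show "(- 4 * q * (Dq q * Dq q) + (2 * b * Dq q - 2 * ellK q * (2 * a - b)) * ((2 * q * q - 1) * (2 * q * q - 1))) * (q * (1 - q\<^sup>2))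
      = - 4 * f_aux q * (ellEc q - (1 - q\<^sup>2) * ellK q)"
      unfolding f_aux_def Dq_def using ha hb by algebra
  qed (use q0 k in simp)
  have e: "(0 * (2 * q * q - 1) - 1 * (4 * q)) / ((2 * q * q - 1) * (2 * q * q - 1)) +
    (2 * b * Dq q - 2 * ellK q * (2 * a - b)) / (Dq q * Dq q) =
    - 4 * f_aux q * (ellEc q - (1 - q\<^sup>2) * ellK q) / (q * (1 - q\<^sup>2) * (Dq q)\<^sup>2 * (2 * q\<^sup>2 - 1)\<^sup>2)"
    unfolding e1 e2 by (simp add: power2_eq_square field_simps)
  show ?thesis using d unfolding e heq .
qed

lemma cont_from_deriv:
  fixes f :: "real \<Rightarrow> real"
  assumes "\<And>x. x \<in> S \<Longrightarrow> \<exists>d. (f has_real_derivative d) (at x)"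
  shows "continuous_on S f"
  using assms by (meson DERIV_isCont continuous_at_imp_continuous_on)

lemma Dq_cont: assumes "0 < a" "b < 1" shows "continuous_on {a..b} Dq"
proof (rule cont_from_deriv)
  fix x assume "x \<in> {a..b}"
  then have "0 < x" "x < 1" using assms by auto
  then show "\<exists>d. (Dq has_real_derivative d) (at x)" using D_deriv by blast
qed
lemma f_cont: assumes "0 < a" "b < 1" shows "continuous_on {a..b} f_aux"
proof (rule cont_from_deriv)
  fix x assume "x \<in> {a..b}"
  then have "0 < x" "x < 1" using assms by auto
  then show "\<exists>d. (f_aux has_real_derivative d) (at x)" using f_deriv by blast
qed
lemma g_cont: assumes "0 < a" "b < 1" shows "continuous_on {a..b} g_aux"
proof (rule cont_from_deriv)
  fix x assume "x \<in> {a..b}"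
  then have "0 < x" "x < 1" using assms by auto
  then show "\<exists>d. (g_aux has_real_derivative d) (at x)" using g_deriv by blast
qed

lemma Dq_strict: assumes "0 < x" "x < y" "y < 1" shows "Dq y < Dq x"
  by (rule DERIV_neg_imp_decreasing[OF assms(2)]) (use assms D_deriv D_neg_deriv in force)

lemma isqrt2: "0 < 1 / sqrt (2::real)" "1 / sqrt (2::real) < 1" "(1 / sqrt (2::real))\<^sup>2 = 1/2"
  by (simp_all add: power_divide)

lemma Dq_isqrt2: "Dq (1 / sqrt 2) > 0"
  using at_isqrt2 pi_gt_zero unfolding Dq_def by linarith

lemma Dq_neg_ex: "\<exists>q. 0 < q \<and> q < 1 \<and> Dq q < 0"
proof -
  obtain q where q: "0 < q" "q < 1" "pi + 1 \<le> ellK q" using K_big[of "pi + 1"] by blast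
  have "ellEc q \<le> pi/2" using KE_bounds(3)[OF q(1,2)] q(1) by (smt (verit) divide_nonneg_nonneg zero_le_power2 pi_gt_zero mult_nonneg_nonneg)
  then have "Dq q < 0" unfolding Dq_def using q(3) by linarith
  then show ?thesis using q by blast
qed

lemma q_star_props:
  shows "1 / sqrt 2 < q_star" "q_star < 1" "Dq q_star = 0"
    "\<And>q. 0 < q \<Longrightarrow> q < q_star \<Longrightarrow> Dq q > 0"
    "\<And>q. q_star < q \<Longrightarrow> q < 1 \<Longrightarrow> Dq q < 0"
proof -
  obtain qb where qb: "0 < qb" "qb < 1" "Dq qb < 0" using Dq_neg_ex by blast
  have lt: "1 / sqrt 2 < qb"
  proof (rule ccontr)
    assume "\<not> 1 / sqrt 2 < qb"
    then consider "qb < 1 / sqrt 2" | "qb = 1 / sqrt 2" by linarith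
    then show False
    proof cases
      case 1
      then have "Dq (1 / sqrt 2) < Dq qb" by (rule Dq_strict[OF qb(1) _ isqrt2(2)])
      then show False using Dq_isqrt2 qb(3) by linarith
    next
      case 2
      then show False using Dq_isqrt2 qb(3) by simp
    qed
  qed
  have "\<exists>x. 1 / sqrt 2 \<le> x \<and> x \<le> qb \<and> Dq x = 0"
    by (rule IVT2'[OF _ _ _ Dq_cont[OF isqrt2(1) qb(2)]]) (use qb(3) Dq_isqrt2 lt in linarith)+
  then obtain z where z: "1 / sqrt 2 \<le> z" "z \<le> qb" "Dq z = 0" by blast
  have z0: "0 < z" "z < 1" using order_less_le_trans[OF isqrt2(1) z(1)] z(2) qb(2) by auto
  have pos: "Dq q > 0" if "0 < q" "q < z" for q using Dq_strict[OF that z0(2)] z(3) by simp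
  have neg: "Dq q < 0" if "z < q" "q < 1" for q using Dq_strict[OF z0(1) that] z(3) by simp
  have uniq: "w = z" if w: "0 < w \<and> w < 1 \<and> 2 * ellEc w - ellK w = 0" for w
  proof -
    have "Dq w = 0" using w unfolding Dq_def by simp
    then show ?thesis using pos[of w] neg[of w] w by (metis linorder_neqE_linordered_idom less_irrefl)
  qed
  have zz: "0 < z \<and> z < 1 \<and> 2 * ellEc z - ellK z = 0" using z0 z(3) unfolding Dq_def by simp
  have qs: "q_star = z"
    unfolding q_star_def by (rule the_equality[where P="\<lambda>q. 0 < q \<and> q < 1 \<and> 2 * ellEc q - ellK q = 0", OF zz uniq])
  show "Dq q_star = 0" "q_star < 1" using qs z(3) z0 by simp_all
  have "z \<noteq> 1 / sqrt 2" using z(3) Dq_isqrt2 by auto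
  then show "1 / sqrt 2 < q_star" using qs z(1) by simp
  show "\<And>q. 0 < q \<Longrightarrow> q < q_star \<Longrightarrow> Dq q > 0" using pos qs by simp
  show "\<And>q. q_star < q \<Longrightarrow> q < 1 \<Longrightarrow> Dq q < 0" using neg qs by simp
qed

definition bq :: "real \<Rightarrow> real" where "bq q = -8*q^4 + 8*q\<^sup>2 - 1"

lemma poly_ineq: "(p::real) \<ge> 13/20 \<Longrightarrow> 8*p^2 - 8*p + 1 \<le> 0 \<Longrightarrow> (20*p-13)^2 < 400*(2*p-1)^2*(1-p)"
  by sos

lemma q4: "(q::real)^4 = (q\<^sup>2)\<^sup>2" by (simp flip: power_mult)

lemma f_neg_b:
  assumes q0: "0 < q" and q1: "q < 1" and h: "1/2 \<le> q\<^sup>2" and b: "bq q \<le> 0"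
  shows "f_aux q < 0"
proof -
  note kf = KE_facts[OF q0 q1]
  have qq: "q\<^sup>2 < 1" by (rule qq1[OF q0 q1])
  have a: "4*q^4 - 5*q\<^sup>2 + 1 = (4*q\<^sup>2 - 1) * (q\<^sup>2 - 1)" unfolding q4 by (simp add: algebra_simps power2_eq_square)
  have "(4*q\<^sup>2 - 1) * (q\<^sup>2 - 1) < 0" using h qq by (intro mult_pos_neg) auto
  then have "(4*q^4 - 5*q\<^sup>2 + 1) * ellK q < 0" unfolding a using kf(1) by (simp add: mult_neg_pos)
  moreover have "(-8*q^4 + 8*q\<^sup>2 - 1) * ellEc q \<le> 0" using b kf(2) unfolding bq_def by (simp add: mult_nonpos_nonneg)
  ultimately show ?thesis unfolding f_aux_def by linarith
qed

lemma fd_neg: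
  assumes q0: "0 < q" and q1: "q < 1" and h: "1/2 \<le> q\<^sup>2" and b: "0 \<le> bq q"
  shows "q * ((20 * q\<^sup>2 - 13) * ellK q - 20 * (2 * q\<^sup>2 - 1) * ellEc q) < 0"
proof -
  note kf = KE_facts[OF q0 q1]
  define p where "p = q\<^sup>2"
  define k where "k = sqrt (1 - p)"
  have qq: "p < 1" unfolding p_def by (rule qq1[OF q0 q1])
  have k0: "0 < k" unfolding k_def using qq by simp
  have kK: "k * ellK q \<le> ellEc q" using kf(5) unfolding k_def p_def .
  have X: "(20 * p - 13) * ellK q - 20 * (2 * p - 1) * ellEc q < 0"
  proof (cases "20 * p - 13 < 0")
    case True
    then have "(20 * p - 13) * ellK q < 0" using kf(1) by (simp add: mult_neg_pos)
    moreover have "0 \<le> 20 * (2 * p - 1) * ellEc q" using h kf(2) unfolding p_def by simp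
    ultimately show ?thesis by linarith
  next
    case False
    then have p13: "13/20 \<le> p" by simp
    have bp: "8*p^2 - 8*p + 1 \<le> 0" using b unfolding bq_def p_def q4 by simp
    have k2: "k\<^sup>2 = 1 - p" unfolding k_def using qq by simp
    have e: "(20*(2*p-1)*k)^2 = 400*(2*p-1)^2*(1-p)" unfolding power_mult_distrib k2 by simp
    have sq: "(20*p-13)^2 < (20*(2*p-1)*k)^2"
      unfolding e by (rule poly_ineq[OF p13 bp])
    have pos: "0 \<le> 20*(2*p-1)*k" using p13 k0 by simp
    have lt: "20*p-13 < 20*(2*p-1)*k" by (rule power2_less_imp_less[OF sq pos])
    have "k * ((20 * p - 13) * ellK q - 20 * (2 * p - 1) * ellEc q)
        = (20 * p - 13) * (k * ellK q) - 20 * (2 * p - 1) * k * ellEc q" by (simp add: algebra_simps)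
    also have "\<dots> \<le> (20 * p - 13) * ellEc q - 20 * (2 * p - 1) * k * ellEc q"
      using kK False by (simp add: mult_left_mono)
    also have "\<dots> = ellEc q * ((20 * p - 13) - 20 * (2 * p - 1) * k)" by (simp add: algebra_simps)
    also have "\<dots> < 0" using kf(2) lt by (simp add: mult_pos_neg)
    finally show ?thesis using k0 by (simp add: mult_less_0_iff)
  qed
  then show ?thesis using q0 unfolding p_def by (simp add: mult_pos_neg)
qed

lemma b_mono:
  assumes x0: "0 < x" and h: "1/2 \<le> x\<^sup>2" and xy: "x \<le> y"
  shows "bq y \<le> bq x"
proof -
  have y2: "x\<^sup>2 \<le> y\<^sup>2" using x0 xy by (intro power_mono) auto
  have "bq y - bq x = (y\<^sup>2 - x\<^sup>2) * (8 - 8 * (y\<^sup>2 + x\<^sup>2))" unfolding bq_def q4 by (simp add: algebra_simps power2_eq_square)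
  also have "\<dots> \<le> 0" using y2 h by (intro mult_nonneg_nonpos) auto
  finally show ?thesis by simp
qed

lemma b_095: "bq (19/20) < 0" unfolding bq_def by (simp add: power2_eq_square power4_eq_xxxx)

lemma f_strict:
  assumes x: "1 / sqrt 2 \<le> x" and xy: "x < y" and y1: "y < 1" and b: "0 \<le> bq y"
  shows "f_aux y < f_aux x"
proof (rule DERIV_neg_imp_decreasing[OF xy])
  fix z assume z: "x \<le> z" "z \<le> y"
  have z0: "0 < z" using order_less_le_trans[OF isqrt2(1) x] z by simp
  have z1: "z < 1" using z y1 by simp
  have hz: "1/2 \<le> z\<^sup>2"
  proof -
    have "(1 / sqrt 2)\<^sup>2 \<le> z\<^sup>2" using x z isqrt2(1) by (intro power_mono) auto
    then show ?thesis using isqrt2(3) by simp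
  qed
  have "0 \<le> bq z" using b b_mono[OF z0 hz z(2)] by simp
  then show "\<exists>d. (f_aux has_real_derivative d) (at z) \<and> d < 0"
    using f_deriv[OF z0 z1] fd_neg[OF z0 z1 hz] by blast
qed

lemma hsq: assumes "1 / sqrt 2 \<le> q" shows "1/2 \<le> q\<^sup>2"
proof -
  have "(1 / sqrt 2)\<^sup>2 \<le> q\<^sup>2" using assms isqrt2(1) by (intro power_mono) auto
  then show ?thesis using isqrt2(3) by simp
qed

lemma hsq_strict: assumes "1 / sqrt 2 < q" shows "1/2 < q\<^sup>2"
proof -
  have "(1 / sqrt 2)\<^sup>2 < q\<^sup>2" using assms isqrt2(1) by (intro power_strict_mono) auto
  then show ?thesis using isqrt2(3) by simp
qed

lemma pos_of_isqrt2: "1 / sqrt 2 \<le> q \<Longrightarrow> 0 < q"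
  using order_less_le_trans[OF isqrt2(1)] by blast

lemma f_zero_b: assumes "1 / sqrt 2 \<le> w" "w < 1" "0 \<le> f_aux w" shows "0 < bq w"
proof (rule ccontr)
  assume "\<not> 0 < bq w"
  then have "f_aux w < 0" using f_neg_b[OF pos_of_isqrt2[OF assms(1)] assms(2) hsq[OF assms(1)]] by simp
  then show False using assms(3) by simp
qed

lemma q_hat_props:
  shows "1 / sqrt 2 < q_hat" "q_hat < 19/20" "f_aux q_hat = 0"
    "\<And>q. 1 / sqrt 2 \<le> q \<Longrightarrow> q < q_hat \<Longrightarrow> f_aux q > 0"
    "\<And>q. q_hat < q \<Longrightarrow> q < 1 \<Longrightarrow> f_aux q < 0"
    "q_hat < q_star"
proof -
  have h95: "1/2 \<le> (19/20::real)\<^sup>2" by (simp add: power2_eq_square)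
  have f95: "f_aux (19/20) < 0" by (rule f_neg_b) (use h95 b_095 in auto)
  have i95: "1 / sqrt 2 < (19/20::real)"
  proof -
    have "(1 / sqrt 2)\<^sup>2 < (19/20::real)\<^sup>2" using isqrt2(3) by (simp add: power2_eq_square)
    then show ?thesis by (rule power_less_imp_less_base) simp
  qed
  have "\<exists>x. 1 / sqrt 2 \<le> x \<and> x \<le> 19/20 \<and> f_aux x = 0"
    by (rule IVT2'[OF _ _ _ f_cont[OF isqrt2(1)]]) (use f95 f_isqrt2 i95 in linarith)+
  then obtain z where z: "1 / sqrt 2 \<le> z" "z \<le> 19/20" "f_aux z = 0" by blast
  have z1: "z < 1" using z(2) by simp
  have bz: "0 < bq z" using f_zero_b[OF z(1) z1] z(3) by simp
  have uniq: "w = z" if w: "1 / sqrt 2 \<le> w" "w < 1" "f_aux w = 0" for w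
  proof (rule ccontr)
    assume "w \<noteq> z"
    then consider "w < z" | "z < w" by linarith
    then show False
    proof cases
      case 1
      then have "f_aux z < f_aux w" using f_strict[OF w(1) 1 z1] bz by simp
      then show False using w(3) z(3) by simp
    next
      case 2
      have "0 < bq w" using f_zero_b[OF w(1) w(2)] w(3) by simp
      then have "f_aux w < f_aux z" using f_strict[OF z(1) 2 w(2)] by simp
      then show False using w(3) z(3) by simp
    qed
  qed
  have zz: "1 / sqrt 2 \<le> z \<and> z < 1 \<and> f_aux z = 0" using z z1 by simp
  have uniq': "\<And>w. 1 / sqrt 2 \<le> w \<and> w < 1 \<and> f_aux w = 0 \<Longrightarrow> w = z" using uniq by blast
  have qh: "q_hat = z"
    unfolding q_hat_def
    by (rule the_equality[where P="\<lambda>q. 1 / sqrt 2 \<le> q \<and> q < 1 \<and> f_aux q = 0", OF zz uniq'])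
  show "f_aux q_hat = 0" using qh z(3) by simp
  have "z \<noteq> 1 / sqrt 2"
  proof
    assume a: "z = 1 / sqrt 2"
    show False using z(3) f_isqrt2 unfolding a by simp
  qed
  then show "1 / sqrt 2 < q_hat" using qh z(1) by simp
  have "z \<noteq> 19/20"
  proof
    assume a: "z = 19/20"
    show False using z(3) f95 unfolding a by simp
  qed
  then show "q_hat < 19/20" using qh z(2) by simp
  have fpos: "f_aux w > 0" if w: "1 / sqrt 2 \<le> w" "w < z" for w
  proof (rule ccontr)
    assume "\<not> f_aux w > 0"
    then have fw: "f_aux w \<le> 0" by simp
    have c: "continuous_on {1 / sqrt 2..w} f_aux" by (rule f_cont[OF isqrt2(1)]) (use w z1 in linarith)
    have "\<exists>x. 1 / sqrt 2 \<le> x \<and> x \<le> w \<and> f_aux x = 0"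
      by (rule IVT2'[OF _ _ _ c]) (use fw f_isqrt2 w in linarith)+
    then obtain u where u: "1 / sqrt 2 \<le> u" "u \<le> w" "f_aux u = 0" by blast
    have "u = z" by (rule uniq) (use u w z1 in linarith)+
    then show False using u(2) w(2) by simp
  qed
  show "\<And>q. 1 / sqrt 2 \<le> q \<Longrightarrow> q < q_hat \<Longrightarrow> f_aux q > 0" using fpos qh by simp
  have fneg: "f_aux w < 0" if w: "z < w" "w < 1" for w
  proof (rule ccontr)
    assume "\<not> f_aux w < 0"
    then have fw: "0 \<le> f_aux w" by simp
    have w0: "1 / sqrt 2 \<le> w" using w z(1) by simp
    have bw: "0 < bq w" using f_zero_b[OF w0 w(2) fw] .
    have w95: "w < 19/20"
    proof (rule ccontr)
      assume "\<not> w < 19/20"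
      then have "19/20 \<le> w" by simp
      then have "bq w \<le> bq (19/20)" by (rule b_mono[rotated 2]) (use h95 in simp_all)
      then show False using bw b_095 by simp
    qed
    have c: "continuous_on {w..19/20} f_aux" by (rule f_cont[OF pos_of_isqrt2[OF w0]]) simp
    have "\<exists>x. w \<le> x \<and> x \<le> 19/20 \<and> f_aux x = 0"
      by (rule IVT2'[OF _ _ _ c]) (use fw f95 w95 in linarith)+
    then obtain u where u: "w \<le> u" "u \<le> 19/20" "f_aux u = 0" by blast
    have "u = z" by (rule uniq) (use u w0 in linarith)+
    then show False using u(1) w(1) by simp
  qed
  show "\<And>q. q_hat < q \<Longrightarrow> q < 1 \<Longrightarrow> f_aux q < 0" using fneg qh by simp
  have fs: "f_aux q_star < 0"
  proof -
    have K2: "ellK q_star = 2 * ellEc q_star" using q_star_props(3) unfolding Dq_def by simp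
    have qs0: "0 < q_star" using q_star_props(1) isqrt2(1) by linarith
    have E0: "ellEc q_star > 0" using KE_facts(2)[OF qs0 q_star_props(2)] .
    have "f_aux q_star = ellEc q_star * (1 - 2 * q_star\<^sup>2)"
      unfolding f_aux_def K2 by (simp add: algebra_simps)
    moreover have "1 - 2 * q_star\<^sup>2 < 0" using hsq_strict[OF q_star_props(1)] by simp
    ultimately show ?thesis using E0 by (simp add: mult_pos_neg)
  qed
  show "q_hat < q_star"
  proof (rule ccontr)
    assume "\<not> q_hat < q_star"
    then have le: "q_star \<le> z" using qh by simp
    have ge: "1 / sqrt 2 \<le> q_star" using q_star_props(1) by simp
    show False
    proof (cases "q_star = z")
      case True
      then show False using fs z(3) by simp
    next
      case False
      then have "q_star < z" using le by simp
      then show False using fpos[OF ge] fs by simp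
    qed
  qed
qed

lemma sgn_helper:
  fixes F P q k D h :: real
  assumes "P > 0" "q > 0" "k > 0" "D \<noteq> 0" "h \<noteq> 0"
  shows "F > 0 \<Longrightarrow> - 4 * F * P / (q * k * D\<^sup>2 * h\<^sup>2) < 0"
    "F < 0 \<Longrightarrow> - 4 * F * P / (q * k * D\<^sup>2 * h\<^sup>2) > 0"
proof -
  have den: "q * k * D\<^sup>2 * h\<^sup>2 > 0" using assms by simp
  show "F > 0 \<Longrightarrow> - 4 * F * P / (q * k * D\<^sup>2 * h\<^sup>2) < 0"
    using den assms(1) by (simp add: divide_neg_pos mult_pos_pos)
  assume F: "F < 0"
  have "0 < - 4 * F" using F by simp
  then have "0 < (- 4 * F) * P" using assms(1) by (rule mult_pos_pos)
  then show "- 4 * F * P / (q * k * D\<^sup>2 * h\<^sup>2) > 0" by (rule divide_pos_pos[OF _ den])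
qed

lemma qs_pos: "0 < q_star" using q_star_props(1) isqrt2(1) by linarith
lemma qh_pos: "0 < q_hat" using q_hat_props(1) isqrt2(1) by linarith
lemma qh_lt1: "q_hat < 1" using q_hat_props(6) q_star_props(2) by linarith

lemma g_isqrt2: "g_aux (1 / sqrt 2) = 0"
  unfolding g_aux_def using isqrt2(3) by simp
lemma g_qstar: "g_aux q_star = 0"
  unfolding g_aux_def using q_star_props(3) unfolding Dq_def by simp

lemma g_deriv_sign:
  assumes q0: "0 < q" and q1: "q < 1"
  shows "Dq q > 0 \<Longrightarrow> f_aux q > 0 \<Longrightarrow> 16 * Dq q * f_aux q / (q * (1 - q\<^sup>2)) > 0"
    "Dq q > 0 \<Longrightarrow> f_aux q < 0 \<Longrightarrow> 16 * Dq q * f_aux q / (q * (1 - q\<^sup>2)) < 0"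
    "Dq q < 0 \<Longrightarrow> f_aux q < 0 \<Longrightarrow> 16 * Dq q * f_aux q / (q * (1 - q\<^sup>2)) > 0"
proof -
  have den: "q * (1 - q\<^sup>2) > 0" using q0 qq1[OF q0 q1] by simp
  show "Dq q > 0 \<Longrightarrow> f_aux q > 0 \<Longrightarrow> 16 * Dq q * f_aux q / (q * (1 - q\<^sup>2)) > 0"
    using den by simp
  show "Dq q > 0 \<Longrightarrow> f_aux q < 0 \<Longrightarrow> 16 * Dq q * f_aux q / (q * (1 - q\<^sup>2)) < 0"
    using den by (simp add: divide_neg_pos mult_pos_neg)
  show "Dq q < 0 \<Longrightarrow> f_aux q < 0 \<Longrightarrow> 16 * Dq q * f_aux q / (q * (1 - q\<^sup>2)) > 0"
    using den by (simp add: mult_neg_neg)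
qed

lemma g_inc1:
  assumes x: "1 / sqrt 2 \<le> x" and xy: "x < y" and y: "y \<le> q_hat"
  shows "g_aux x < g_aux y"
proof (rule DERIV_pos_imp_increasing_open[OF xy])
  fix z assume z: "x < z" "z < y"
  have z0: "0 < z" "z < 1" using z x y pos_of_isqrt2[OF x] qh_lt1 by linarith+
  have "Dq z > 0" by (rule q_star_props(4)) (use z y z0 q_hat_props(6) in linarith)+
  moreover have "f_aux z > 0" by (rule q_hat_props(4)) (use z x y in linarith)+
  ultimately show "\<exists>d. (g_aux has_real_derivative d) (at z) \<and> d > 0"
    using g_deriv[OF z0] g_deriv_sign(1)[OF z0] by blast
next
  show "continuous_on {x..y} g_aux" by (rule g_cont[OF pos_of_isqrt2[OF x]]) (use y qh_lt1 in linarith)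
qed

lemma g_dec2:
  assumes x: "q_hat \<le> x" and xy: "x < y" and y: "y \<le> q_star"
  shows "g_aux y < g_aux x"
proof (rule DERIV_neg_imp_decreasing_open[OF xy])
  fix z assume z: "x < z" "z < y"
  have z0: "0 < z" "z < 1" using z x y qh_pos q_star_props(2) by linarith+
  have "Dq z > 0" by (rule q_star_props(4)) (use z y z0 in linarith)+
  moreover have "f_aux z < 0" by (rule q_hat_props(5)) (use z x z0 in linarith)+
  ultimately show "\<exists>d. (g_aux has_real_derivative d) (at z) \<and> d < 0"
    using g_deriv[OF z0] g_deriv_sign(2)[OF z0] by blast
next
  show "continuous_on {x..y} g_aux" by (rule g_cont) (use x y qh_pos q_star_props(2) in linarith)+
qed

lemma g_inc3:
  assumes x: "q_star \<le> x" and xy: "x < y" and y: "y < 1"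
  shows "g_aux x < g_aux y"
proof (rule DERIV_pos_imp_increasing_open[OF xy])
  fix z assume z: "x < z" "z < y"
  have z0: "0 < z" "z < 1" using z x y qs_pos by linarith+
  have "Dq z < 0" by (rule q_star_props(5)) (use z x z0 in linarith)+
  moreover have "f_aux z < 0" by (rule q_hat_props(5)) (use z x z0 q_hat_props(6) in linarith)+
  ultimately show "\<exists>d. (g_aux has_real_derivative d) (at z) \<and> d > 0"
    using g_deriv[OF z0] g_deriv_sign(3)[OF z0] by blast
next
  show "continuous_on {x..y} g_aux" by (rule g_cont) (use x y qs_pos in linarith)+
qed

lemma lambda_hat_pos: "lambda_hat > 0"
  unfolding lambda_hat_def using g_inc1[OF order_refl q_hat_props(1) order_refl] g_isqrt2 by simp

lemma g_big: "\<exists>q. q_star < q \<and> q < 1 \<and> c < g_aux q"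
proof -
  define s where "s = sqrt \<bar>c\<bar> + 1"
  obtain q where q: "0 < q" "q < 1" "3/4 \<le> q\<^sup>2" "pi + s \<le> ellK q" using K_big[of "pi + s"] by blast
  have E: "ellEc q \<le> pi/2" using KE_bounds(3)[OF q(1,2)] q(1) pi_gt_zero
    by (smt (verit) divide_nonneg_nonneg zero_le_power2 mult_nonneg_nonneg)
  have D: "Dq q \<le> - s" unfolding Dq_def using E q(4) by linarith
  have s0: "0 < s" unfolding s_def by (simp add: add_nonneg_pos)
  have "s\<^sup>2 \<le> (- Dq q)\<^sup>2" using D s0 by (intro power_mono) auto
  then have "s\<^sup>2 \<le> (Dq q)\<^sup>2" by simp
  moreover have "\<bar>c\<bar> < s\<^sup>2"
  proof -
    have e: "s\<^sup>2 = sqrt \<bar>c\<bar> * sqrt \<bar>c\<bar> + 2 * sqrt \<bar>c\<bar> + 1" unfolding s_def by (simp add: power2_eq_square algebra_simps)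
    have "sqrt \<bar>c\<bar> * sqrt \<bar>c\<bar> = \<bar>c\<bar>" by simp
    moreover have "0 \<le> sqrt \<bar>c\<bar>" by simp
    ultimately show ?thesis unfolding e by linarith
  qed
  ultimately have c1: "\<bar>c\<bar> < (Dq q)\<^sup>2" by linarith
  have "(Dq q)\<^sup>2 \<le> g_aux q"
  proof -
    have "1 \<le> 8 * (2 * q\<^sup>2 - 1)" using q(3) by simp
    then have "1 * (Dq q)\<^sup>2 \<le> 8 * (2 * q\<^sup>2 - 1) * (Dq q)\<^sup>2" by (intro mult_right_mono) auto
    then show ?thesis unfolding g_aux_def Dq_def by (simp add: algebra_simps)
  qed
  then have cg: "c < g_aux q" using c1 by linarith
  have "q_star < q"
  proof (rule ccontr)
    assume "\<not> q_star < q"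
    then consider "q < q_star" | "q = q_star" by linarith
    then show False
    proof cases
      case 1 then show False using q_star_props(4)[OF q(1)] D s0 by simp
    next
      case 2 then show False using q_star_props(3) D s0 by simp
    qed
  qed
  then show ?thesis using q(2) cg by blast
qed

lemma q1_props:
  assumes c0: "0 < c" and c1: "c \<le> lambda_hat"
  shows "1 / sqrt 2 < q1 c" "q1 c \<le> q_hat" "g_aux (q1 c) = c"
proof -
  have c: "continuous_on {1 / sqrt 2..q_hat} g_aux"
    by (rule g_cont[OF isqrt2(1) qh_lt1])
  have "\<exists>x. 1 / sqrt 2 \<le> x \<and> x \<le> q_hat \<and> g_aux x = c"
    by (rule IVT'[OF _ _ _ c]) (use g_isqrt2 c0 c1 q_hat_props(1) in \<open>simp_all add: lambda_hat_def\<close>)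
  then obtain z where z: "1 / sqrt 2 \<le> z" "z \<le> q_hat" "g_aux z = c" by blast
  have zn: "z \<noteq> 1 / sqrt 2"
  proof
    assume a: "z = 1 / sqrt 2"
    show False using z(3) g_isqrt2 c0 unfolding a by simp
  qed
  have zz: "1 / sqrt 2 < z \<and> z \<le> q_hat \<and> g_aux z = c" using z zn by simp
  have uniq: "\<And>w. 1 / sqrt 2 < w \<and> w \<le> q_hat \<and> g_aux w = c \<Longrightarrow> w = z"
  proof -
    fix w assume w: "1 / sqrt 2 < w \<and> w \<le> q_hat \<and> g_aux w = c"
    show "w = z"
    proof (rule ccontr)
      assume "w \<noteq> z"
      then consider "w < z" | "z < w" by linarith
      then show False
      proof cases
        case 1 then show False using g_inc1[of w z] w z by simp
      next
        case 2 then show False using g_inc1[of z w] w z by simp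
      qed
    qed
  qed
  have "q1 c = z"
    unfolding q1_def by (rule the_equality[where P="\<lambda>q. 1 / sqrt 2 < q \<and> q \<le> q_hat \<and> g_aux q = c", OF zz uniq])
  then show "1 / sqrt 2 < q1 c" "q1 c \<le> q_hat" "g_aux (q1 c) = c" using zz by simp_all
qed

lemma q2_props:
  assumes c0: "0 < c" and c1: "c \<le> lambda_hat"
  shows "q_hat \<le> q2 c" "q2 c < q_star" "g_aux (q2 c) = c"
proof -
  have c: "continuous_on {q_hat..q_star} g_aux"
    by (rule g_cont[OF qh_pos q_star_props(2)])
  have "\<exists>x. q_hat \<le> x \<and> x \<le> q_star \<and> g_aux x = c"
    by (rule IVT2'[OF _ _ _ c]) (use g_qstar c0 c1 q_hat_props(6) in \<open>simp_all add: lambda_hat_def\<close>)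
  then obtain z where z: "q_hat \<le> z" "z \<le> q_star" "g_aux z = c" by blast
  have zn: "z \<noteq> q_star"
  proof
    assume a: "z = q_star"
    show False using z(3) g_qstar c0 unfolding a by simp
  qed
  have zz: "q_hat \<le> z \<and> z < q_star \<and> g_aux z = c" using z zn by simp
  have uniq: "\<And>w. q_hat \<le> w \<and> w < q_star \<and> g_aux w = c \<Longrightarrow> w = z"
  proof -
    fix w assume w: "q_hat \<le> w \<and> w < q_star \<and> g_aux w = c"
    show "w = z"
    proof (rule ccontr)
      assume "w \<noteq> z"
      then consider "w < z" | "z < w" by linarith
      then show False
      proof cases
        case 1 then show False using g_dec2[of w z] w zz by simp
      next
        case 2 then show False using g_dec2[of z w] w zz by simp
      qed
    qed
  qed
  have "q2 c = z"
    unfolding q2_def by (rule the_equality[where P="\<lambda>q. q_hat \<le> q \<and> q < q_star \<and> g_aux q = c", OF zz uniq])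
  then show "q_hat \<le> q2 c" "q2 c < q_star" "g_aux (q2 c) = c" using zz by simp_all
qed

lemma q3_props:
  assumes c0: "0 < c"
  shows "q_star < q3 c" "q3 c < 1" "g_aux (q3 c) = c"
proof -
  obtain qb where qb: "q_star < qb" "qb < 1" "c < g_aux qb" using g_big[of c] by blast
  have c: "continuous_on {q_star..qb} g_aux"
    by (rule g_cont[OF qs_pos qb(2)])
  have "\<exists>x. q_star \<le> x \<and> x \<le> qb \<and> g_aux x = c"
    by (rule IVT'[OF _ _ _ c]) (use g_qstar c0 qb in simp_all)
  then obtain z where z: "q_star \<le> z" "z \<le> qb" "g_aux z = c" by blast
  have zn: "z \<noteq> q_star"
  proof
    assume a: "z = q_star"
    show False using z(3) g_qstar c0 unfolding a by simp
  qed
  have zz: "q_star < z \<and> z < 1 \<and> g_aux z = c" using z zn qb(2) by simp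
  have uniq: "\<And>w. q_star < w \<and> w < 1 \<and> g_aux w = c \<Longrightarrow> w = z"
  proof -
    fix w assume w: "q_star < w \<and> w < 1 \<and> g_aux w = c"
    show "w = z"
    proof (rule ccontr)
      assume "w \<noteq> z"
      then consider "w < z" | "z < w" by linarith
      then show False
      proof cases
        case 1 then show False using g_inc3[of w z] w zz by simp
      next
        case 2 then show False using g_inc3[of z w] w zz by simp
      qed
    qed
  qed
  have "q3 c = z"
    unfolding q3_def by (rule the_equality[where P="\<lambda>q. q_star < q \<and> q < 1 \<and> g_aux q = c", OF zz uniq])
  then show "q_star < q3 c" "q3 c < 1" "g_aux (q3 c) = c" using zz by simp_all
qed

lemma q1_mono: assumes a: "0 < c" "c < c'" "c' \<le> lambda_hat" shows "q1 c < q1 c'"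
proof (rule ccontr)
  assume n: "\<not> q1 c < q1 c'"
  have cc: "c \<le> lambda_hat" using a by linarith
  have c'0: "0 < c'" using a by linarith
  note p = q1_props[OF a(1) cc]
  note p' = q1_props[OF c'0 a(3)]
  show False
  proof (cases "q1 c = q1 c'")
    case True then show False using p(3) p'(3) a(2) by simp
  next
    case False
    then have lt: "q1 c' < q1 c" using n by simp
    have "g_aux (q1 c') < g_aux (q1 c)" by (rule g_inc1[OF _ lt p(2)]) (use p'(1) in simp)
    then show False using p(3) p'(3) a(2) by simp
  qed
qed

lemma q2_mono: assumes a: "0 < c" "c < c'" "c' \<le> lambda_hat" shows "q2 c' < q2 c"
proof (rule ccontr)
  assume n: "\<not> q2 c' < q2 c"
  have cc: "c \<le> lambda_hat" using a by linarith
  have c'0: "0 < c'" using a by linarith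
  note p = q2_props[OF a(1) cc]
  note p' = q2_props[OF c'0 a(3)]
  show False
  proof (cases "q2 c = q2 c'")
    case True then show False using p(3) p'(3) a(2) by simp
  next
    case False
    then have lt: "q2 c < q2 c'" using n by simp
    have "g_aux (q2 c') < g_aux (q2 c)" by (rule g_dec2[OF p(1) lt]) (use p'(2) in simp)
    then show False using p(3) p'(3) a(2) by simp
  qed
qed

lemma q3_mono: assumes a: "0 < c" "c < c'" shows "q3 c < q3 c'"
proof (rule ccontr)
  assume n: "\<not> q3 c < q3 c'"
  have c'0: "0 < c'" using a by linarith
  note p = q3_props[OF a(1)]
  note p' = q3_props[OF c'0]
  show False
  proof (cases "q3 c = q3 c'")
    case True then show False using p(3) p'(3) a(2) by simp
  next
    case False
    then have lt: "q3 c' < q3 c" using n by simp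
    have "g_aux (q3 c') < g_aux (q3 c)" by (rule g_inc3[OF _ lt p(2)]) (use p'(1) in simp)
    then show False using p(3) p'(3) a(2) by simp
  qed
qed

lemma H_has_deriv:
  assumes "0 < z" "z < 1" "Dq z \<noteq> 0" "1/2 < z\<^sup>2"
  shows "\<exists>d. (Hq has_real_derivative d) (at z)"
  using H_deriv[OF assms(1,2,3)] assms(4) by force

lemma H_deriv_ex_sign:
  assumes z0: "0 < z" and z1: "z < 1" and D: "Dq z \<noteq> 0" and h: "1/2 < z\<^sup>2"
  shows "f_aux z > 0 \<Longrightarrow> \<exists>d. (Hq has_real_derivative d) (at z) \<and> d < 0"
    "f_aux z < 0 \<Longrightarrow> \<exists>d. (Hq has_real_derivative d) (at z) \<and> d > 0"
proof -
  have h': "2 * z\<^sup>2 - 1 \<noteq> 0" using h by simp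
  note d = H_deriv[OF z0 z1 D h']
  have P: "ellEc z - (1 - z\<^sup>2) * ellK z > 0" by (rule KE_facts(3)[OF z0 z1])
  have k: "1 - z\<^sup>2 > 0" using qq1[OF z0 z1] by simp
  note s = sgn_helper[OF P z0 k D h']
  show "f_aux z > 0 \<Longrightarrow> \<exists>d. (Hq has_real_derivative d) (at z) \<and> d < 0" using d s(1) by blast
  show "f_aux z < 0 \<Longrightarrow> \<exists>d. (Hq has_real_derivative d) (at z) \<and> d > 0" using d s(2) by blast
qed

lemma H_cont:
  assumes "0 < a" "b < 1" "\<And>z. a \<le> z \<Longrightarrow> z \<le> b \<Longrightarrow> Dq z \<noteq> 0" "1/2 < a\<^sup>2"
  shows "continuous_on {a..b} Hq"
proof (rule cont_from_deriv)
  fix z assume z: "z \<in> {a..b}"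
  then have z0: "0 < z" "z < 1" using assms(1,2) by auto
  have "a\<^sup>2 \<le> z\<^sup>2" using z assms(1) by (intro power_mono) auto
  then have "1/2 < z\<^sup>2" using assms(4) by linarith
  then show "\<exists>d. (Hq has_real_derivative d) (at z)"
    using H_has_deriv[OF z0 assms(3)] z by auto
qed

lemma H_dec1:
  assumes x: "1 / sqrt 2 < x" and xy: "x < y" and y: "y \<le> q_hat"
  shows "Hq y < Hq x"
proof (rule DERIV_neg_imp_decreasing_open[OF xy])
  fix z assume z: "x < z" "z < y"
  have z0: "0 < z" "z < 1" using z x y isqrt2(1) qh_lt1 by linarith+
  have D: "Dq z \<noteq> 0" using q_star_props(4)[OF z0(1)] z y q_hat_props(6) by force
  have h: "1/2 < z\<^sup>2" by (rule hsq_strict) (use x z in linarith)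
  have f: "f_aux z > 0" by (rule q_hat_props(4)) (use z x y in linarith)+
  show "\<exists>d. (Hq has_real_derivative d) (at z) \<and> d < 0" by (rule H_deriv_ex_sign(1)[OF z0 D h f])
next
  have x0: "0 < x" using x isqrt2(1) by linarith
  show "continuous_on {x..y} Hq"
  proof (rule H_cont[OF x0])
    show "y < 1" using y qh_lt1 by linarith
    show "1/2 < x\<^sup>2" by (rule hsq_strict[OF x])
    fix z assume "x \<le> z" "z \<le> y"
    then show "Dq z \<noteq> 0" using q_star_props(4)[of z] x0 y q_hat_props(6) by force
  qed
qed

lemma H_inc2:
  assumes x: "q_hat \<le> x" and xy: "x < y" and y: "y < q_star"
  shows "Hq x < Hq y"
proof (rule DERIV_pos_imp_increasing_open[OF xy])
  fix z assume z: "x < z" "z < y"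
  have z0: "0 < z" "z < 1" using z x y qh_pos q_star_props(2) by linarith+
  have D: "Dq z \<noteq> 0" using q_star_props(4)[OF z0(1)] z y by force
  have h: "1/2 < z\<^sup>2" by (rule hsq_strict) (use x z q_hat_props(1) in linarith)
  have f: "f_aux z < 0" by (rule q_hat_props(5)) (use z x z0 in linarith)+
  show "\<exists>d. (Hq has_real_derivative d) (at z) \<and> d > 0" by (rule H_deriv_ex_sign(2)[OF z0 D h f])
next
  have x0: "0 < x" using x qh_pos by linarith
  show "continuous_on {x..y} Hq"
  proof (rule H_cont[OF x0])
    show "y < 1" using y q_star_props(2) by linarith
    show "1/2 < x\<^sup>2" by (rule hsq_strict) (use x q_hat_props(1) in linarith)
    fix z assume "x \<le> z" "z \<le> y"
    then show "Dq z \<noteq> 0" using q_star_props(4)[of z] x0 y by force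
  qed
qed

lemma H_inc3:
  assumes x: "q_star < x" and xy: "x < y" and y: "y < 1"
  shows "Hq x < Hq y"
proof (rule DERIV_pos_imp_increasing_open[OF xy])
  fix z assume z: "x < z" "z < y"
  have z0: "0 < z" "z < 1" using z x y qs_pos by linarith+
  have D: "Dq z \<noteq> 0" using q_star_props(5)[of z] z x z0 by force
  have h: "1/2 < z\<^sup>2" by (rule hsq_strict) (use x z q_star_props(1) in linarith)
  have f: "f_aux z < 0" by (rule q_hat_props(5)) (use z x z0 q_hat_props(6) in linarith)+
  show "\<exists>d. (Hq has_real_derivative d) (at z) \<and> d > 0" by (rule H_deriv_ex_sign(2)[OF z0 D h f])
next
  have x0: "0 < x" using x qs_pos by linarith
  show "continuous_on {x..y} Hq"
  proof (rule H_cont[OF x0 y])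
    show "1/2 < x\<^sup>2" by (rule hsq_strict) (use x q_star_props(1) in linarith)
    fix z assume "x \<le> z" "z \<le> y"
    then show "Dq z \<noteq> 0" using q_star_props(5)[of z] x y by force
  qed
qed

lemma energy_alg:
  fixes n l lam E K q D h al sg :: real
  assumes n: "n > 0" and l: "l > 0" and D: "D = 2 * E - K" and Dn: "D \<noteq> 0" and h: "h = 2 * q\<^sup>2 - 1" and hn: "h \<noteq> 0"
    and al: "al = sg * (2 * n / l * D)" and sg: "sg * sg = 1"
    and g: "8 * D\<^sup>2 * h = lam * l\<^sup>2 / n\<^sup>2"
  shows "8 * n * al * (E - (1 - q\<^sup>2) * K) + lam * (2 * n * K / al) = sg * (lam * l * (1 / h + 2 * K / D))"
proof -
  have lam: "lam = 8 * D\<^sup>2 * h * n\<^sup>2 / l\<^sup>2" using g n l by (simp add: field_simps)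
  have sgn: "sg \<noteq> 0" using sg by auto
  have "8 * n * al * (E - (1 - q\<^sup>2) * K) + lam * (2 * n * K / al)
      = sg * (16 * n\<^sup>2 * D * (E - (1 - q\<^sup>2) * K) / l + 8 * D * h * n\<^sup>2 * K / l)"
    unfolding al lam using n l Dn sgn sg by (simp add: field_simps power2_eq_square)
  also have "\<dots> = sg * (8 * D * n\<^sup>2 * (2 * (E - (1 - q\<^sup>2) * K) + h * K) / l)"
    using l by (simp add: field_simps)
  also have "2 * (E - (1 - q\<^sup>2) * K) + h * K = D + 2 * h * K"
    unfolding D h by (simp add: algebra_simps)
  also have "8 * D * n\<^sup>2 * (D + 2 * h * K) / l = lam * l * (1 / h + 2 * K / D)"
    unfolding lam using Dn hn l by (simp add: field_simps power2_eq_square)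
  finally show ?thesis .
qed

lemma energy_arc:
  assumes q0: "0 < q" and q1: "q < 1" and D: "Dq q > 0" and h: "1/2 < q\<^sup>2"
    and lam: "lam > 0" and l: "l > 0" and n: "n > 0" and g: "g_aux q = lam * l\<^sup>2 / (real n)\<^sup>2"
  shows "energy lam (arc_x q (arc_alpha l n q)) (arc_y q (arc_alpha l n q)) (2 * real n * ellK q / arc_alpha l n q)
    = lam * l * Hq q"
proof -
  define al where "al = arc_alpha l n q"
  have alD: "al = 1 * (2 * real n / l * Dq q)" unfolding al_def arc_alpha_def Dq_def by simp
  have al0: "al > 0" unfolding alD using n l D by simp
  have qabs: "\<bar>q\<bar> < 1" using q0 q1 by simp
  have X: "arc_x q al = (\<lambda>s. 1 * ((2 * ellE (jac_am (al * s - ellK q) q) q + 2 * ellEc q - al * s) / al))"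
    by (simp add: arc_x_def[abs_def])
  have Y: "arc_y q al = (\<lambda>s. 2 * q * jac_cn (al * s - ellK q) q / al)"
    by (simp add: arc_y_def[abs_def])
  have "energy lam (arc_x q al) (arc_y q al) (2 * real n * ellK q / al)
     = 8 * real n * al * (ellEc q - (1 - q\<^sup>2) * ellK q) + lam * (2 * real n * ellK q / al)"
    unfolding X Y by (rule curve_energy[OF qabs al0]) (use n in simp_all)
  also have "\<dots> = 1 * (lam * l * (1 / (2 * q\<^sup>2 - 1) + 2 * ellK q / Dq q))"
    by (rule energy_alg[OF _ l Dq_def _ refl _ alD]) (use n D h g in \<open>simp_all add: g_aux_def Dq_def\<close>)
  finally show ?thesis unfolding al_def Hq_def by simp
qed

lemma energy_loop_f:
  assumes q0: "0 < q" and q1: "q < 1" and D: "Dq q < 0" and h: "1/2 < q\<^sup>2"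
    and lam: "lam > 0" and l: "l > 0" and n: "n > 0" and g: "g_aux q = lam * l\<^sup>2 / (real n)\<^sup>2"
  shows "energy lam (loop_x q (loop_alpha l n q)) (arc_y q (loop_alpha l n q)) (2 * real n * ellK q / loop_alpha l n q)
    = - (lam * l * Hq q)"
proof -
  define al where "al = loop_alpha l n q"
  have alD: "al = (-1) * (2 * real n / l * Dq q)" unfolding al_def loop_alpha_def Dq_def by (simp add: algebra_simps)
  have t: "2 * real n * Dq q / l < 0" using n l D by (intro divide_neg_pos mult_pos_neg) auto
  have al0: "al > 0" unfolding alD using t by simp
  have qabs: "\<bar>q\<bar> < 1" using q0 q1 by simp
  have X: "loop_x q al = (\<lambda>s. (-1) * ((2 * ellE (jac_am (al * s - ellK q) q) q + 2 * ellEc q - al * s) / al))"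
    using al0 by (simp add: loop_x_def[abs_def] field_simps)
  have Y: "arc_y q al = (\<lambda>s. 2 * q * jac_cn (al * s - ellK q) q / al)"
    by (simp add: arc_y_def[abs_def])
  have "energy lam (loop_x q al) (arc_y q al) (2 * real n * ellK q / al)
     = 8 * real n * al * (ellEc q - (1 - q\<^sup>2) * ellK q) + lam * (2 * real n * ellK q / al)"
    unfolding X Y by (rule curve_energy[OF qabs al0]) (use n in simp_all)
  also have "\<dots> = (-1) * (lam * l * (1 / (2 * q\<^sup>2 - 1) + 2 * ellK q / Dq q))"
    by (rule energy_alg[OF _ l Dq_def _ refl _ alD]) (use n D h g in \<open>simp_all add: g_aux_def Dq_def\<close>)
  finally show ?thesis unfolding al_def Hq_def by simp
qed

lemma sarc_val:
  assumes c0: "0 < lam * l\<^sup>2 / (real n)\<^sup>2" and c1: "lam * l\<^sup>2 / (real n)\<^sup>2 \<le> lambda_hat"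
    and lam: "lam > 0" and l: "l > 0" and n: "n > 0"
  shows "energy_sarc lam l n = lam * l * Hq (q1 (lam * l\<^sup>2 / (real n)\<^sup>2))"
proof -
  define q where "q = q1 (lam * l\<^sup>2 / (real n)\<^sup>2)"
  note p = q1_props[OF c0 c1, folded q_def]
  have q0: "0 < q" using p(1) isqrt2(1) by linarith
  have q1': "q < 1" using p(2) qh_lt1 by linarith
  have D: "Dq q > 0" by (rule q_star_props(4)[OF q0]) (use p(2) q_hat_props(6) in linarith)
  have h: "1/2 < q\<^sup>2" by (rule hsq_strict[OF p(1)])
  have nn: "(0::real) < real n" using n by simp
  show ?thesis
    unfolding energy_sarc_def Let_def sarc_q_def q_def[symmetric]
    by (rule energy_arc[OF q0 q1' D h lam l n p(3)])
qed

lemma larc_val: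
  assumes c0: "0 < lam * l\<^sup>2 / (real n)\<^sup>2" and c1: "lam * l\<^sup>2 / (real n)\<^sup>2 \<le> lambda_hat"
    and lam: "lam > 0" and l: "l > 0" and n: "n > 0"
  shows "energy_larc lam l n = lam * l * Hq (q2 (lam * l\<^sup>2 / (real n)\<^sup>2))"
proof -
  define q where "q = q2 (lam * l\<^sup>2 / (real n)\<^sup>2)"
  note p = q2_props[OF c0 c1, folded q_def]
  have q0: "0 < q" using p(1) qh_pos by linarith
  have q1': "q < 1" using p(2) q_star_props(2) by linarith
  have D: "Dq q > 0" by (rule q_star_props(4)[OF q0 p(2)])
  have h: "1/2 < q\<^sup>2" by (rule hsq_strict) (use p(1) q_hat_props(1) in linarith)
  have nn: "(0::real) < real n" using n by simp
  show ?thesis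
    unfolding energy_larc_def Let_def larc_q_def q_def[symmetric]
    by (rule energy_arc[OF q0 q1' D h lam l n p(3)])
qed

lemma loop_val:
  assumes c0: "0 < lam * l\<^sup>2 / (real n)\<^sup>2"
    and lam: "lam > 0" and l: "l > 0" and n: "n > 0"
  shows "energy_loop lam l n = - (lam * l * Hq (q3 (lam * l\<^sup>2 / (real n)\<^sup>2)))"
proof -
  define q where "q = q3 (lam * l\<^sup>2 / (real n)\<^sup>2)"
  note p = q3_props[OF c0, folded q_def]
  have q0: "0 < q" using p(1) qs_pos by linarith
  have D: "Dq q < 0" by (rule q_star_props(5)[OF p(1) p(2)])
  have h: "1/2 < q\<^sup>2" by (rule hsq_strict) (use p(1) q_star_props(1) in linarith)
  have nn: "(0::real) < real n" using n by simp
  show ?thesis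
    unfolding energy_loop_def Let_def loop_q_def q_def[symmetric]
    by (rule energy_loop_f[OF q0 p(2) D h lam l n p(3)])
qed

theorem lemma4p4:
  fixes lam l :: real and n m :: nat
  assumes "lam > 0" and "l > 0" and "0 < n" and "n < m"
  shows "(n_min lam l \<le> int n \<longrightarrow>
            energy_sarc lam l n < energy_sarc lam l m \<and>
            energy_larc lam l n < energy_larc lam l m)
         \<and> energy_loop lam l n < energy_loop lam l m"
proof -
  note lam = assms(1) and l = assms(2)
  have n0: "0 < n" and m0: "0 < m" using assms(3,4) by simp_all
  define cn where "cn = lam * l\<^sup>2 / (real n)\<^sup>2"
  define cm where "cm = lam * l\<^sup>2 / (real m)\<^sup>2"
  have ll: "0 < lam * l\<^sup>2" using lam l by simp
  have cn0: "0 < cn" unfolding cn_def using ll n0 by simp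
  have cm0: "0 < cm" unfolding cm_def using ll m0 by simp
  have nm2: "(real n)\<^sup>2 < (real m)\<^sup>2" using assms(4) by (intro power_strict_mono) auto
  have cmn: "cm < cn" unfolding cm_def cn_def
    by (rule divide_strict_left_mono[OF nm2 ll]) (use n0 m0 in simp)
  have HL: "0 < lam * l" using lam l by simp
  have part1: "energy_sarc lam l n < energy_sarc lam l m \<and> energy_larc lam l n < energy_larc lam l m"
    if nmin: "n_min lam l \<le> int n"
  proof -
    have "sqrt (lam * l\<^sup>2 / lambda_hat) \<le> real n"
      using nmin unfolding n_min_def by (simp add: ceiling_le_iff)
    then have "lam * l\<^sup>2 / lambda_hat \<le> (real n)\<^sup>2"
      using ll lambda_hat_pos by (simp add: sqrt_le_D)
    then have cn1: "cn \<le> lambda_hat" unfolding cn_def using lambda_hat_pos n0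
      by (simp add: field_simps)
    have cm1: "cm \<le> lambda_hat" using cmn cn1 by linarith
    have es: "energy_sarc lam l n = lam * l * Hq (q1 cn)" "energy_sarc lam l m = lam * l * Hq (q1 cm)"
      using sarc_val[OF cn0[unfolded cn_def] cn1[unfolded cn_def] lam l n0]
        sarc_val[OF cm0[unfolded cm_def] cm1[unfolded cm_def] lam l m0]
      unfolding cn_def cm_def by simp_all
    have el: "energy_larc lam l n = lam * l * Hq (q2 cn)" "energy_larc lam l m = lam * l * Hq (q2 cm)"
      using larc_val[OF cn0[unfolded cn_def] cn1[unfolded cn_def] lam l n0]
        larc_val[OF cm0[unfolded cm_def] cm1[unfolded cm_def] lam l m0]
      unfolding cn_def cm_def by simp_all
    have "q1 cm < q1 cn" by (rule q1_mono[OF cm0 cmn cn1])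
    then have "Hq (q1 cn) < Hq (q1 cm)"
      by (rule H_dec1[OF q1_props(1)[OF cm0 cm1] _ q1_props(2)[OF cn0 cn1]])
    then have s: "energy_sarc lam l n < energy_sarc lam l m" unfolding es by (rule mult_strict_left_mono[OF _ HL])
    have "q2 cn < q2 cm" by (rule q2_mono[OF cm0 cmn cn1])
    then have "Hq (q2 cn) < Hq (q2 cm)"
      by (rule H_inc2[OF q2_props(1)[OF cn0 cn1] _ q2_props(2)[OF cm0 cm1]])
    then have "energy_larc lam l n < energy_larc lam l m" unfolding el by (rule mult_strict_left_mono[OF _ HL])
    with s show ?thesis by simp
  qed
  have eo: "energy_loop lam l n = - (lam * l * Hq (q3 cn))" "energy_loop lam l m = - (lam * l * Hq (q3 cm))"
    using loop_val[OF cn0[unfolded cn_def] lam l n0] loop_val[OF cm0[unfolded cm_def] lam l m0]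
    unfolding cn_def cm_def by simp_all
  have "q3 cm < q3 cn" by (rule q3_mono[OF cm0 cmn])
  then have "Hq (q3 cm) < Hq (q3 cn)"
    by (rule H_inc3[OF q3_props(1)[OF cm0] _ q3_props(2)[OF cn0]])
  then have "lam * l * Hq (q3 cm) < lam * l * Hq (q3 cn)" by (rule mult_strict_left_mono[OF _ HL])
  then have "energy_loop lam l n < energy_loop lam l m" unfolding eo by simp
  with part1 show ?thesis by blast
qed

end
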